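(* Let $L\ge 2$, $d\ge1$, and let $x_0,\dots,x_{L-1}\in\mathbb{R}^d$ be pairwise distinct templates of equal Euclidean norm. Let $n_0,\dots,n_{M-1}$ be i.i.d. $\mathcal{N}(0,I_{d\times d})$ and let $\hat{x}_0,\dots,\hat{x}_{L-1}$ be the output of either the hard-assignment or the soft-assignment algorithm. Then for every $0\le\ell\le L-1$ there exist real coefficients $\alpha_{\ell k}$, $k=0,\dots,L-1$, such that $\hat{x}_\ell\to\sum_{k=0}^{L-1}\alpha_{\ell k}x_k$ almost surely as $M\to\infty$.
   Context: Hard-assignment: $\hat{R}_i=\arg\max_\ell\langle n_i,x_\ell\rangle$, $\mathcal{A}_\ell=\{n_i:\hat{R}_i=\ell\}$, $\hat{x}_\ell=\frac{1}{|\mathcal{A}_\ell|}\sum_{n_i\in\mathcal{A}_\ell}n_i$. Soft-assignment: $p_i^{(\ell)}=\frac{\exp(\langle n_i,x_\ell\rangle)}{\sum_r\exp(\langle n_i,x_r\rangle)}$, $\hat{x}_\ell=\frac{\sum_ip_i^{(\ell)}n_i}{\sum_ip_i^{(\ell)}}$. *)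

theory Defs
  imports "HOL-Probability.Probability"
begin

text \<open>Templates are x 0, ..., x (L-1) in real^'d; the noise samples are given as a
  sequence ns :: nat => real^'d, of which the first m are used.\<close>

text \<open>Hard assignment: index of a template maximising the inner product
  (ties, which occur with probability zero, are broken towards the least index).\<close>
definition hard_assign :: "(nat \<Rightarrow> real^'d) \<Rightarrow> nat \<Rightarrow> real^'d \<Rightarrow> nat" where
  "hard_assign x L v = (LEAST l. l < L \<and> (\<forall>r<L. inner v (x r) \<le> inner v (x l)))"

text \<open>Hard-assignment estimate of template l from the first m samples
  (empty cluster gives 0, since 1/0 = 0).\<close>
definition hard_est :: "(nat \<Rightarrow> real^'d) \<Rightarrow> nat \<Rightarrow> (nat \<Rightarrow> real^'d) \<Rightarrow> nat \<Rightarrow> nat \<Rightarrow> real^'d" where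
  "hard_est x L ns m l =
     (1 / real (card {i\<in>{..<m}. hard_assign x L (ns i) = l})) *\<^sub>R
       (\<Sum>i\<in>{i\<in>{..<m}. hard_assign x L (ns i) = l}. ns i)"

definition soft_weight :: "(nat \<Rightarrow> real^'d) \<Rightarrow> nat \<Rightarrow> real^'d \<Rightarrow> nat \<Rightarrow> real" where
  "soft_weight x L v l = exp (inner v (x l)) / (\<Sum>r<L. exp (inner v (x r)))"

definition soft_est :: "(nat \<Rightarrow> real^'d) \<Rightarrow> nat \<Rightarrow> (nat \<Rightarrow> real^'d) \<Rightarrow> nat \<Rightarrow> nat \<Rightarrow> real^'d" where
  "soft_est x L ns m l =
     (1 / (\<Sum>i<m. soft_weight x L (ns i) l)) *\<^sub>R (\<Sum>i<m. soft_weight x L (ns i) l *\<^sub>R ns i)"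

end

theory Submission
  imports Defs "HOL-Library.Discrete_Functions"
begin

lemma sandwich_sq:
  fixes S :: "nat \<Rightarrow> real"
  assumes mono: "\<And>a b. a \<le> b \<Longrightarrow> S a \<le> S b" and nn: "\<And>a. 0 \<le> S a"
    and lim: "(\<lambda>k. S (k^2) / real (k^2)) \<longlonglongrightarrow> \<mu>"
  shows "(\<lambda>m. S m / real m) \<longlonglongrightarrow> \<mu>"
proof -
  define k where "k m = floor_sqrt m" for m
  have kinf: "filterlim k at_top sequentially"
    unfolding filterlim_at_top
  proof
    fix K show "eventually (\<lambda>m. K \<le> k m) sequentially"
      unfolding eventually_sequentially k_def by (intro exI[of _ "K^2"]) (auto simp: le_floor_sqrt_iff)
  qed
  have r1: "(\<lambda>j. real ((j+1)^2) / real (j^2)) \<longlonglongrightarrow> 1"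
    by real_asymp
  have r2: "(\<lambda>j. real (j^2) / real ((j+1)^2)) \<longlonglongrightarrow> 1"
    by real_asymp
  have limS: "(\<lambda>j. S ((j+1)^2) / real ((j+1)^2)) \<longlonglongrightarrow> \<mu>"
    using LIMSEQ_Suc[OF lim] by simp
  have U: "(\<lambda>j. S ((j+1)^2) / real ((j+1)^2) * (real ((j+1)^2) / real (j^2))) \<longlonglongrightarrow> \<mu> * 1"
    by (intro tendsto_mult limS r1)
  have Lo: "(\<lambda>j. S (j^2) / real (j^2) * (real (j^2) / real ((j+1)^2))) \<longlonglongrightarrow> \<mu> * 1"
    by (intro tendsto_mult lim r2)
  have U': "(\<lambda>m. S ((k m+1)^2) / real ((k m+1)^2) * (real ((k m+1)^2) / real ((k m)^2))) \<longlonglongrightarrow> \<mu>"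
    using filterlim_compose[OF U kinf] by (simp add: o_def)
  have L': "(\<lambda>m. S ((k m)^2) / real ((k m)^2) * (real ((k m)^2) / real ((k m+1)^2))) \<longlonglongrightarrow> \<mu>"
    using filterlim_compose[OF Lo kinf] by (simp add: o_def)
  show ?thesis
  proof (rule tendsto_sandwich[OF _ _ L' U'])
    show "eventually (\<lambda>m. S ((k m)^2) / real ((k m)^2) * (real ((k m)^2) / real ((k m+1)^2)) \<le> S m / real m) sequentially"
      unfolding eventually_sequentially
    proof (intro exI[of _ 1] allI impI)
      fix m :: nat assume m: "1 \<le> m"
      have k0: "0 < k m" using m by (simp add: k_def)
      have a: "(k m)^2 \<le> m" by (simp add: k_def)
      have b: "m < (k m + 1)^2" using Suc_floor_sqrt_power2_gt[of m] by (simp add: k_def)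
      have "S ((k m)^2) / real ((k m)^2) * (real ((k m)^2) / real ((k m+1)^2)) = S ((k m)^2) / real ((k m+1)^2)"
        using k0 by simp
      also have "\<dots> \<le> S m / real ((k m+1)^2)"
        by (intro divide_right_mono mono a) simp
      also have "\<dots> \<le> S m / real m"
        using m nn[of m] by (intro divide_left_mono) (use b in \<open>auto simp del: of_nat_power simp: of_nat_less_iff less_imp_le\<close>)
      finally show "S ((k m)^2) / real ((k m)^2) * (real ((k m)^2) / real ((k m+1)^2)) \<le> S m / real m" .
    qed
    show "eventually (\<lambda>m. S m / real m \<le> S ((k m+1)^2) / real ((k m+1)^2) * (real ((k m+1)^2) / real ((k m)^2))) sequentially"
      unfolding eventually_sequentially
    proof (intro exI[of _ 1] allI impI)
      fix m :: nat assume m: "1 \<le> m"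
      have k0: "0 < k m" using m by (simp add: k_def)
      have a: "(k m)^2 \<le> m" by (simp add: k_def)
      have b: "m < (k m + 1)^2" using Suc_floor_sqrt_power2_gt[of m] by (simp add: k_def)
      have "S m / real m \<le> S m / real ((k m)^2)"
        using m a k0 nn[of m] by (intro divide_left_mono) auto
      also have "\<dots> \<le> S ((k m+1)^2) / real ((k m)^2)"
        using b by (intro divide_right_mono mono) auto
      also have "\<dots> = S ((k m+1)^2) / real ((k m+1)^2) * (real ((k m+1)^2) / real ((k m)^2))"
        by simp
      finally show "S m / real m \<le> S ((k m+1)^2) / real ((k m+1)^2) * (real ((k m+1)^2) / real ((k m)^2))" .
    qed
  qed
qed


lemma (in prob_space) var_sum_bound:
  fixes X :: "nat \<Rightarrow> 'a \<Rightarrow> real"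
  assumes meas: "\<And>i. X i \<in> borel_measurable M"
  and sq: "\<And>i. integrable M (\<lambda>\<omega>. (X i \<omega>)^2)"
  and mean: "\<And>i. expectation (X i) = \<mu>"
  and sqm: "\<And>i. expectation (\<lambda>\<omega>. (X i \<omega>)^2) \<le> C"
  and ind: "\<And>i j. i \<noteq> j \<Longrightarrow> indep_var borel (X i) borel (X j)"
  shows "integrable M (\<lambda>\<omega>. (\<Sum>i<m. X i \<omega> - \<mu>)^2)"
    and "expectation (\<lambda>\<omega>. (\<Sum>i<m. X i \<omega> - \<mu>)^2) \<le> real m * C"
proof -
  define D where "D i \<omega> = X i \<omega> - \<mu>" for i \<omega>
  have intX: "integrable M (X i)" for i
    using square_integrable_imp_integrable[OF meas sq] .
  have intD: "integrable M (D i)" for i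
    unfolding D_def using intX by auto
  have sqD: "integrable M (\<lambda>\<omega>. (D i \<omega>)^2)" for i
  proof -
    have "(\<lambda>\<omega>. (D i \<omega>)^2) = (\<lambda>\<omega>. (X i \<omega>)^2 - 2 * \<mu> * X i \<omega> + \<mu>^2)"
      by (auto simp: D_def power2_eq_square algebra_simps)
    then show ?thesis using sq intX by auto
  qed
  have ED: "expectation (D i) = 0" for i
    unfolding D_def using intX mean prob_space by (simp add: Bochner_Integration.integral_diff)
  have ED2: "expectation (\<lambda>\<omega>. (D i \<omega>)^2) \<le> C" for i
  proof -
    have "(\<lambda>\<omega>. (D i \<omega>)^2) = (\<lambda>\<omega>. (X i \<omega>)^2 - (2 * \<mu> * X i \<omega> - \<mu>^2))"
      by (auto simp: D_def power2_eq_square algebra_simps)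
    then have "expectation (\<lambda>\<omega>. (D i \<omega>)^2) = expectation (\<lambda>\<omega>. (X i \<omega>)^2) - (2 * \<mu> * \<mu> - \<mu>^2)"
      using sq intX mean prob_space by (simp add: Bochner_Integration.integral_diff)
    also have "\<dots> \<le> C"
    proof -
      have h: "0 \<le> \<mu>*\<mu>" by simp
      show ?thesis using sqm[of i] h unfolding power2_eq_square by linarith
    qed
    finally show ?thesis .
  qed
  have intDD: "integrable M (\<lambda>\<omega>. D a \<omega> * D b \<omega>)" for a b
  proof (rule Bochner_Integration.integrable_bound[where f="\<lambda>\<omega>. (D a \<omega>)^2 + (D b \<omega>)^2"])
    show "integrable M (\<lambda>\<omega>. (D a \<omega>)^2 + (D b \<omega>)^2)" using sqD by auto
    show "(\<lambda>\<omega>. D a \<omega> * D b \<omega>) \<in> borel_measurable M" unfolding D_def using meas by measurable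
    show "AE \<omega> in M. norm (D a \<omega> * D b \<omega>) \<le> norm ((D a \<omega>)^2 + (D b \<omega>)^2)"
    proof (intro AE_I2)
      fix \<omega>
      have "2 * \<bar>D a \<omega>\<bar> * \<bar>D b \<omega>\<bar> \<le> (D a \<omega>)^2 + (D b \<omega>)^2"
        using sum_squares_bound[of "\<bar>D a \<omega>\<bar>" "\<bar>D b \<omega>\<bar>"] by (simp add: power2_eq_square)
      moreover have "\<bar>D a \<omega>\<bar> * \<bar>D b \<omega>\<bar> \<ge> 0" by simp
      moreover have "0 \<le> (D a \<omega>)^2 + (D b \<omega>)^2" by simp
      ultimately show "norm (D a \<omega> * D b \<omega>) \<le> norm ((D a \<omega>)^2 + (D b \<omega>)^2)"
        unfolding real_norm_def abs_mult by linarith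
    qed
  qed
  have off: "expectation (\<lambda>\<omega>. D a \<omega> * D b \<omega>) = 0" if "a \<noteq> b" for a b
  proof -
    have "indep_var borel (D a) borel (D b)"
    proof -
      have "indep_var borel ((\<lambda>x. x - \<mu>) \<circ> X a) borel ((\<lambda>x. x - \<mu>) \<circ> X b)"
        by (rule indep_var_compose[OF ind[OF that]]) auto
      then show ?thesis by (simp add: D_def[abs_def] o_def)
    qed
    then show ?thesis using indep_var_lebesgue_integral[of "D a" "D b"] intD ED by simp
  qed
  have eq: "(\<lambda>\<omega>. (\<Sum>i<m. X i \<omega> - \<mu>)^2) = (\<lambda>\<omega>. \<Sum>a<m. \<Sum>b<m. D a \<omega> * D b \<omega>)"
    by (auto simp: D_def power2_eq_square sum_product)
  show "integrable M (\<lambda>\<omega>. (\<Sum>i<m. X i \<omega> - \<mu>)^2)"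
    unfolding eq using intDD by auto
  have "expectation (\<lambda>\<omega>. (\<Sum>i<m. X i \<omega> - \<mu>)^2) = (\<Sum>a<m. \<Sum>b<m. expectation (\<lambda>\<omega>. D a \<omega> * D b \<omega>))"
    unfolding eq using intDD by (simp add: Bochner_Integration.integral_sum)
  also have "\<dots> = (\<Sum>a<m. expectation (\<lambda>\<omega>. (D a \<omega>)^2))"
  proof (rule sum.cong[OF refl])
    fix a assume a: "a \<in> {..<m}"
    have "(\<Sum>b<m. expectation (\<lambda>\<omega>. D a \<omega> * D b \<omega>)) = (\<Sum>b\<in>{a}. expectation (\<lambda>\<omega>. D a \<omega> * D b \<omega>))"
      using a by (intro sum.mono_neutral_right) (auto simp: off)
    then show "(\<Sum>b<m. expectation (\<lambda>\<omega>. D a \<omega> * D b \<omega>)) = expectation (\<lambda>\<omega>. (D a \<omega>)^2)"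
      by (simp add: power2_eq_square)
  qed
  also have "\<dots> \<le> (\<Sum>a<m. C)" by (intro sum_mono ED2)
  finally show "expectation (\<lambda>\<omega>. (\<Sum>i<m. X i \<omega> - \<mu>)^2) \<le> real m * C" by simp
qed


lemma (in prob_space) slln_nonneg:
  fixes X :: "nat \<Rightarrow> 'a \<Rightarrow> real"
  assumes meas: "\<And>i. X i \<in> borel_measurable M"
  and nonneg: "\<And>i \<omega>. 0 \<le> X i \<omega>"
  and sq: "\<And>i. integrable M (\<lambda>\<omega>. (X i \<omega>)^2)"
  and mean: "\<And>i. expectation (X i) = \<mu>"
  and sqm: "\<And>i. expectation (\<lambda>\<omega>. (X i \<omega>)^2) \<le> C"
  and ind: "\<And>i j. i \<noteq> j \<Longrightarrow> indep_var borel (X i) borel (X j)"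
  shows "AE \<omega> in M. (\<lambda>m. (\<Sum>i<m. X i \<omega>) / real m) \<longlonglongrightarrow> \<mu>"
proof -
  define S where "S m \<omega> = (\<Sum>i<m. X i \<omega>)" for m \<omega>
  have Smeas[measurable]: "S m \<in> borel_measurable M" for m
    unfolding S_def using meas by measurable
  have cheb: "measure M {\<omega>\<in>space M. \<bar>S m \<omega> / real m - \<mu>\<bar> \<ge> e} \<le> C / (real m * e^2)"
    if m: "0 < m" and e: "0 < e" for m e
  proof -
    have eqs: "{\<omega>\<in>space M. \<bar>S m \<omega> / real m - \<mu>\<bar> \<ge> e} = {\<omega>\<in>space M. \<bar>\<Sum>i<m. X i \<omega> - \<mu>\<bar> \<ge> real m * e}"
    proof -
      have "\<bar>S m \<omega> / real m - \<mu>\<bar> * real m = \<bar>\<Sum>i<m. X i \<omega> - \<mu>\<bar>" for \<omega>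
      proof -
        have "(S m \<omega> / real m - \<mu>) * real m = (\<Sum>i<m. X i \<omega> - \<mu>)"
          using m by (simp add: S_def sum_subtractf field_simps)
        then show ?thesis by (metis abs_mult abs_of_nat)
      qed
      then have "(\<bar>S m \<omega> / real m - \<mu>\<bar> \<ge> e) = (\<bar>\<Sum>i<m. X i \<omega> - \<mu>\<bar> \<ge> real m * e)" for \<omega>
        using m by (metis mult.commute mult_le_cancel_right_pos of_nat_0_less_iff)
      then show ?thesis by auto
    qed
    have "measure M {\<omega>\<in>space M. \<bar>\<Sum>i<m. X i \<omega> - \<mu>\<bar> \<ge> real m * e} \<le>
        expectation (\<lambda>\<omega>. (\<Sum>i<m. X i \<omega> - \<mu>)^2) / (real m * e)^2"
      by (rule second_moment_method) (use var_sum_bound(1)[OF meas sq mean sqm ind] m e meas in auto)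
    also have "\<dots> \<le> (real m * C) / (real m * e)^2"
      by (intro divide_right_mono var_sum_bound(2)[OF meas sq mean sqm ind]) auto
    also have "\<dots> = C / (real m * e^2)"
      using m by (simp add: power2_eq_square field_simps)
    finally show ?thesis by (simp add: eqs)
  qed
  define A where "A p k = {\<omega>\<in>space M. \<bar>S ((k+1)^2) \<omega> / real ((k+1)^2) - \<mu>\<bar> \<ge> 1 / real (Suc p)}" for p k
  have Ameas[measurable]: "A p k \<in> sets M" for p k
    unfolding A_def by measurable
  have evt: "AE \<omega> in M. eventually (\<lambda>k. \<omega> \<in> space M - A p k) sequentially" for p
  proof (rule borel_cantelli_AE1)
    show "A p k \<in> sets M" for k by simp
    show "emeasure M (A p k) < \<infinity>" for k by (simp add: less_top[symmetric])
    have b: "measure M (A p k) \<le> C * real (Suc p)^2 * inverse (real (k+1) ^ 2)" for k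
    proof -
      have "measure M (A p k) \<le> C / (real ((k+1)^2) * (1 / real (Suc p))^2)"
        unfolding A_def by (rule cheb) auto
      also have "\<dots> = C * real (Suc p)^2 * inverse (real (k+1) ^ 2)"
        by (simp add: field_simps power2_eq_square)
      finally show ?thesis .
    qed
    have "summable (\<lambda>k. inverse (real (k+1) ^ 2))"
      using summable_ignore_initial_segment[OF inverse_power_summable[of 2], of 1] by simp
    then have "summable (\<lambda>k. C * real (Suc p)^2 * inverse (real (k+1) ^ 2))"
      by (rule summable_mult)
    then show "summable (\<lambda>k. measure M (A p k))"
      by (rule summable_comparison_test'[where N=0]) (use b in auto)
  qed
  then have "AE \<omega> in M. \<forall>p. eventually (\<lambda>k. \<omega> \<in> space M - A p k) sequentially"
    by (simp add: AE_all_countable)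
  then show ?thesis
  proof (rule AE_mp[OF _ AE_I2], intro impI)
    fix \<omega> assume \<omega>: "\<omega> \<in> space M" and H: "\<forall>p. eventually (\<lambda>k. \<omega> \<in> space M - A p k) sequentially"
    have lim1: "(\<lambda>k. S ((k+1)^2) \<omega> / real ((k+1)^2)) \<longlonglongrightarrow> \<mu>"
    proof (rule tendstoI)
      fix e :: real assume e: "0 < e"
      obtain p where p: "0 < p" "inverse (real p) < e" using ex_inverse_of_nat_less[OF e] by auto
      have "1 / real (Suc p) \<le> 1 / real p" using p by (intro divide_left_mono) auto
      then have pe: "1 / real (Suc p) < e" using p(2) unfolding inverse_eq_divide by linarith
      show "eventually (\<lambda>k. dist (S ((k+1)^2) \<omega> / real ((k+1)^2)) \<mu> < e) sequentially"
        using H[rule_format, of p]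
        by eventually_elim (use \<omega> pe in \<open>auto simp: A_def dist_real_def\<close>)
    qed
    have lim2: "(\<lambda>k. S (k^2) \<omega> / real (k^2)) \<longlonglongrightarrow> \<mu>"
      using lim1 filterlim_sequentially_Suc[where f="\<lambda>k. S (k^2) \<omega> / real (k^2)"] by simp
    have "(\<lambda>m. S m \<omega> / real m) \<longlonglongrightarrow> \<mu>"
    proof (rule sandwich_sq[OF _ _ lim2])
      show "S a \<omega> \<le> S b \<omega>" if "a \<le> b" for a b
        unfolding S_def using that nonneg by (intro sum_mono2) auto
      show "0 \<le> S a \<omega>" for a unfolding S_def using nonneg by (intro sum_nonneg) auto
    qed
    then show "(\<lambda>m. (\<Sum>i<m. X i \<omega>) / real m) \<longlonglongrightarrow> \<mu>" by (simp add: S_def)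
  qed
qed


lemma trunc_lim:
  fixes h w :: "real \<Rightarrow> real"
  assumes hm: "h \<in> borel_measurable borel" and wi: "integrable lborel w" and b: "\<And>t. \<bar>h t\<bar> \<le> w t"
  shows "(\<lambda>k::nat. \<integral>t. indicator {- real k..real k} t * h t \<partial>lborel) \<longlonglongrightarrow> (\<integral>t. h t \<partial>lborel)"
proof (rule integral_dominated_convergence[where w=w])
  show "h \<in> borel_measurable lborel" using hm by simp
  show "(\<lambda>t. indicator {- real k..real k} t * h t) \<in> borel_measurable lborel" for k
    using hm by measurable
  show "integrable lborel w" by fact
  show "AE t in lborel. (\<lambda>k. indicator {- real k..real k} t * h t) \<longlonglongrightarrow> h t"
  proof (intro AE_I2)
    fix t :: real
    obtain N :: nat where N: "\<bar>t\<bar> \<le> real N" using real_arch_simple by blast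
    have "eventually (\<lambda>k. h t = indicator {- real k..real k} t * h t) sequentially"
      unfolding eventually_sequentially
      by (intro exI[of _ N]) (use N in \<open>auto simp: indicator_def\<close>)
    then show "(\<lambda>k. indicator {- real k..real k} t * h t) \<longlonglongrightarrow> h t"
      by (rule Lim_transform_eventually[OF tendsto_const])
  qed
  show "AE t in lborel. norm (indicator {- real k..real k} t * h t) \<le> w t" for k
    using b by (intro AE_I2) (auto simp: indicator_def order_trans[OF _ b])
qed

lemma std_normal_deriv:
  "(std_normal_density has_real_derivative (- t * std_normal_density t)) (at t)"
  unfolding std_normal_density_def[abs_def]
  by (auto intro!: derivative_eq_intros simp: field_simps power2_eq_square)

lemma std_normal_tendsto0: "(\<lambda>k::nat. std_normal_density (real k)) \<longlonglongrightarrow> 0"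
  unfolding std_normal_density_def by real_asymp

lemma stein_1d:
  fixes g g' :: "real \<Rightarrow> real"
  assumes der: "\<And>t. (g has_real_derivative g' t) (at t)" and cont: "\<And>t. isCont g' t"
    and bg: "\<And>t. \<bar>g t\<bar> \<le> B" and bg': "\<And>t. \<bar>g' t\<bar> \<le> B"
  shows "(\<integral>t. std_normal_density t * (t * g t) \<partial>lborel) = (\<integral>t. std_normal_density t * g' t \<partial>lborel)"
proof -
  let ?phi = std_normal_density
  have gcont: "isCont g t" for t using der DERIV_isCont by blast
  have gm: "g \<in> borel_measurable borel" using gcont by (intro borel_measurable_continuous_onI) (simp add: continuous_at_imp_continuous_on)
  have g'm: "g' \<in> borel_measurable borel" using cont by (intro borel_measurable_continuous_onI) (simp add: continuous_at_imp_continuous_on)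
  have ibp: "(\<integral>t. indicator {- real k..real k} t * (?phi t * (t * g t)) \<partial>lborel) =
       (\<integral>t. indicator {- real k..real k} t * (?phi t * g' t) \<partial>lborel)
        - (g (real k) * ?phi (real k) - g (- real k) * ?phi (- real k))" for k :: nat
  proof -
    have "(\<integral>t. (g t * (- t * ?phi t)) * indicator {- real k .. real k} t \<partial>lborel)
        = g (real k) * ?phi (real k) - g (- real k) * ?phi (- real k)
          - \<integral>t. (g' t * ?phi t) * indicator {- real k .. real k} t \<partial>lborel"
    proof (rule integral_by_parts[where F=g and G="?phi" and f=g' and g="\<lambda>t. - t * ?phi t"])
      show "- real k \<le> real k" by simp
      show "\<And>x. - real k \<le> x \<Longrightarrow> x \<le> real k \<Longrightarrow> isCont g' x" using cont by blast
      have "isCont ?phi x" for x using DERIV_isCont[OF std_normal_deriv] by blast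
      then show "\<And>x. - real k \<le> x \<Longrightarrow> x \<le> real k \<Longrightarrow> isCont (\<lambda>t. - t * ?phi t) x"
        by (intro continuous_intros) auto
      show "\<And>x. (g has_real_derivative g' x) (at x)" by (rule der)
      show "\<And>x. (?phi has_real_derivative - x * ?phi x) (at x)" by (rule std_normal_deriv)
    qed
    then have "- (\<integral>t. indicator {- real k..real k} t * (?phi t * (t * g t)) \<partial>lborel)
        = g (real k) * ?phi (real k) - g (- real k) * ?phi (- real k)
          - (\<integral>t. indicator {- real k..real k} t * (?phi t * g' t) \<partial>lborel)"
      by (simp add: ac_simps)
    then show ?thesis by linarith
  qed
  have l1: "(\<lambda>k::nat. \<integral>t. indicator {- real k..real k} t * (?phi t * (t * g t)) \<partial>lborel)
      \<longlonglongrightarrow> (\<integral>t. ?phi t * (t * g t) \<partial>lborel)"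
  proof (rule trunc_lim[where w="\<lambda>t. B * (?phi t * \<bar>t\<bar> ^ 1)"])
    show "(\<lambda>t. ?phi t * (t * g t)) \<in> borel_measurable borel" using gm by measurable
    show "integrable lborel (\<lambda>t. B * (?phi t * \<bar>t\<bar> ^ 1))"
      by (intro integrable_mult_right integrable_std_normal_moment_abs)
    show "\<bar>?phi t * (t * g t)\<bar> \<le> B * (?phi t * \<bar>t\<bar> ^ 1)" for t
    proof -
      have "\<bar>?phi t * (t * g t)\<bar> = (?phi t * \<bar>t\<bar>) * \<bar>g t\<bar>" by (simp add: abs_mult)
      also have "\<dots> \<le> (?phi t * \<bar>t\<bar>) * B" by (rule mult_left_mono[OF bg]) simp
      finally show ?thesis by (simp add: mult.commute)
    qed
  qed
  have l2: "(\<lambda>k::nat. \<integral>t. indicator {- real k..real k} t * (?phi t * g' t) \<partial>lborel)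
      \<longlonglongrightarrow> (\<integral>t. ?phi t * g' t \<partial>lborel)"
  proof (rule trunc_lim[where w="\<lambda>t. B * ?phi t"])
    show "(\<lambda>t. ?phi t * g' t) \<in> borel_measurable borel" using g'm by measurable
    show "integrable lborel (\<lambda>t. B * ?phi t)"
      by (intro integrable_mult_right integrable_normal_density) auto
    show "\<bar>?phi t * g' t\<bar> \<le> B * ?phi t" for t
      using mult_right_mono[OF bg'[of t] normal_density_nonneg[of 0 1 t]] by (simp add: abs_mult mult.commute)
  qed
  have bd: "(\<lambda>k::nat. g (real k) * ?phi (real k) - g (- real k) * ?phi (- real k)) \<longlonglongrightarrow> 0"
  proof -
    have phs: "?phi (- x) = ?phi x" for x by (simp add: std_normal_density_def)
    have z: "(\<lambda>k::nat. B * ?phi (real k)) \<longlonglongrightarrow> 0"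
      using tendsto_mult_right_zero[OF std_normal_tendsto0] by simp
    have pa: "\<forall>k::nat. norm (g (real k) * ?phi (real k)) \<le> B * ?phi (real k)"
      using mult_right_mono[OF bg normal_density_nonneg] by (simp add: abs_mult)
    have pb: "\<forall>k::nat. norm (g (- real k) * ?phi (- real k)) \<le> B * ?phi (real k)"
      using mult_right_mono[OF bg normal_density_nonneg] by (simp add: abs_mult phs)
    have a: "(\<lambda>k::nat. g (real k) * ?phi (real k)) \<longlonglongrightarrow> 0"
      by (rule Lim_null_comparison[OF always_eventually[OF pa] z])
    have b: "(\<lambda>k::nat. g (- real k) * ?phi (- real k)) \<longlonglongrightarrow> 0"
      by (rule Lim_null_comparison[OF always_eventually[OF pb] z])
    show ?thesis using tendsto_diff[OF a b] by simp
  qed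
  have "(\<lambda>k::nat. \<integral>t. indicator {- real k..real k} t * (?phi t * (t * g t)) \<partial>lborel)
      \<longlonglongrightarrow> (\<integral>t. ?phi t * g' t \<partial>lborel) - 0"
    unfolding ibp by (intro tendsto_diff l2 bd)
  from LIMSEQ_unique[OF l1 this] show ?thesis by simp
qed


lemma borel_measurable_vec:
  fixes f :: "'a \<Rightarrow> real^'n"
  assumes "\<And>j. (\<lambda>x. f x $ j) \<in> borel_measurable M"
  shows "f \<in> borel_measurable M"
  unfolding borel_measurable_euclidean_space[of f]
  by (auto simp: Basis_vec_def cart_eq_inner_axis[symmetric] assms)

locale gsetup = prob_space M for M :: "'w measure" +
  fixes n :: "nat \<Rightarrow> 'w \<Rightarrow> real^'d"
  assumes ind: "indep_vars (\<lambda>_. borel) (\<lambda>(i, j) \<omega>. n i \<omega> $ j) UNIV"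
  and dist: "\<And>i j. distributed M lborel (\<lambda>\<omega>. n i \<omega> $ j) (\<lambda>t. ennreal (std_normal_density t))"
begin

lemma coord_meas[measurable]: "(\<lambda>\<omega>. n i \<omega> $ j) \<in> borel_measurable M"
  using distributed_measurable[OF dist[of i j]] by simp

lemma n_meas[measurable]: "n i \<in> borel_measurable M"
  by (rule borel_measurable_vec) (rule coord_meas)

lemma coord_distr: "distr M borel (\<lambda>\<omega>. n i \<omega> $ j) = density lborel (\<lambda>t. ennreal (std_normal_density t))"
proof -
  have "distr M borel (\<lambda>\<omega>. n i \<omega> $ j) = distr M lborel (\<lambda>\<omega>. n i \<omega> $ j)"
    by (rule distr_cong) auto
  also have "\<dots> = density lborel (\<lambda>t. ennreal (std_normal_density t))"
    using distributed_distr_eq_density[OF dist[of i j]] .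
  finally show ?thesis .
qed

lemma coord_integrable:
  assumes f: "f \<in> borel_measurable borel"
  shows "integrable M (\<lambda>\<omega>. f (n i \<omega> $ j)) \<longleftrightarrow> integrable lborel (\<lambda>t. std_normal_density t * f t)"
proof -
  have "integrable M (\<lambda>\<omega>. f (n i \<omega> $ j)) \<longleftrightarrow> integrable (distr M borel (\<lambda>\<omega>. n i \<omega> $ j)) f"
    using f by (intro integrable_distr_eq[symmetric]) auto
  also have "\<dots> \<longleftrightarrow> integrable lborel (\<lambda>t. std_normal_density t * f t)"
    unfolding coord_distr using f by (subst integrable_density) auto
  finally show ?thesis .
qed

lemma coord_integral:
  assumes f: "f \<in> borel_measurable borel"
  shows "expectation (\<lambda>\<omega>. f (n i \<omega> $ j)) = (\<integral>t. std_normal_density t * f t \<partial>lborel)"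
proof -
  have "expectation (\<lambda>\<omega>. f (n i \<omega> $ j)) = integral\<^sup>L (distr M borel (\<lambda>\<omega>. n i \<omega> $ j)) f"
    using f by (intro integral_distr[symmetric]) auto
  also have "\<dots> = (\<integral>t. std_normal_density t * f t \<partial>lborel)"
    unfolding coord_distr using f by (subst integral_density) auto
  finally show ?thesis .
qed

lemma coord_int1: "integrable M (\<lambda>\<omega>. n i \<omega> $ j)"
  using coord_integrable[of "\<lambda>t. t" i j] integrable_std_normal_moment[of 1] by simp

lemma coord_int_abs: "integrable M (\<lambda>\<omega>. \<bar>n i \<omega> $ j\<bar>)"
  using coord_integrable[of "\<lambda>t. \<bar>t\<bar>" i j] integrable_std_normal_moment_abs[of 1] by simp

lemma coord_int2: "integrable M (\<lambda>\<omega>. (n i \<omega> $ j)^2)"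
  using coord_integrable[of "\<lambda>t. t^2" i j] integrable_std_normal_moment[of 2] by simp

lemma coord_sq: "expectation (\<lambda>\<omega>. (n i \<omega> $ j)^2) = 1"
  using coord_integral[of "\<lambda>t. t^2" i j] integral_std_normal_moment_even[of 1] by simp

lemma indep_pair:
  assumes ab: "a \<noteq> b"
  shows "indep_var borel (n a) borel (n b)"
proof -
  define X where "X = (\<lambda>(i, j) \<omega>. n i \<omega> $ j :: real)"
  define A where "A = {a} \<times> (UNIV :: 'd set)"
  define B where "B = {b} \<times> (UNIV :: 'd set)"
  have "indep_var (PiM A (\<lambda>_. borel)) (\<lambda>\<omega>. restrict (\<lambda>k. X k \<omega>) A) (PiM B (\<lambda>_. borel)) (\<lambda>\<omega>. restrict (\<lambda>k. X k \<omega>) B)"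
    by (rule indep_var_restrict[OF ind[folded X_def]]) (use ab in \<open>auto simp: A_def B_def\<close>)
  moreover have mA: "(\<lambda>f. \<chi> j. f (a, j)) \<in> borel_measurable (PiM A (\<lambda>_. borel :: real measure))"
    by (rule borel_measurable_vec) (simp, rule measurable_component_singleton, simp add: A_def)
  moreover have mB: "(\<lambda>f. \<chi> j. f (b, j)) \<in> borel_measurable (PiM B (\<lambda>_. borel :: real measure))"
    by (rule borel_measurable_vec) (simp, rule measurable_component_singleton, simp add: B_def)
  ultimately have "indep_var borel ((\<lambda>f. \<chi> j. f (a, j)) \<circ> (\<lambda>\<omega>. restrict (\<lambda>k. X k \<omega>) A))
      borel ((\<lambda>f. \<chi> j. f (b, j)) \<circ> (\<lambda>\<omega>. restrict (\<lambda>k. X k \<omega>) B))"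
    by (rule indep_var_compose)
  moreover have "(\<lambda>f. \<chi> j. f (a, j)) \<circ> (\<lambda>\<omega>. restrict (\<lambda>k. X k \<omega>) A) = n a"
    by (auto simp: A_def X_def vec_eq_iff)
  moreover have "(\<lambda>f. \<chi> j. f (b, j)) \<circ> (\<lambda>\<omega>. restrict (\<lambda>k. X k \<omega>) B) = n b"
    by (auto simp: B_def X_def vec_eq_iff)
  ultimately show ?thesis by simp
qed

end

context gsetup begin

lemma law_eq: "distr M borel (n i) = distr M borel (n 0)"
proof -
  define X where "X = (\<lambda>(i, j) \<omega>. n i \<omega> $ j :: real)"
  define N where "N = density lborel (\<lambda>t. ennreal (std_normal_density t))"
  have probN: "prob_space N" unfolding N_def by (rule prob_space_normal_density) simp
  have setsN: "sets N = sets borel" by (simp add: N_def)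
  have rv: "random_variable borel (X k)" for k
    by (cases k) (simp add: X_def)
  have dX: "distr M borel (X k) = N" for k
    by (cases k) (simp add: X_def N_def coord_distr)
  define T where "T \<omega> = (\<lambda>k\<in>UNIV. X k \<omega>)" for \<omega>
  have P: "distr M (PiM UNIV (\<lambda>_. borel)) T = PiM UNIV (\<lambda>_. N)"
  proof -
    have "distr M (PiM UNIV (\<lambda>_. borel)) T = PiM UNIV (\<lambda>k. distr M borel (X k))"
      unfolding T_def by (rule indep_vars_iff_distr_eq_PiM[THEN iffD1]) (use rv ind in \<open>auto simp: X_def\<close>)
    also have "\<dots> = PiM UNIV (\<lambda>_. N)" by (simp add: dX)
    finally show ?thesis .
  qed
  have Tm: "T \<in> measurable M (PiM UNIV (\<lambda>_. borel))"
    unfolding T_def using rv by (intro measurable_restrict) auto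
  define V where "V g = ((\<chi> j. g j) :: real^'d)" for g :: "'d \<Rightarrow> real"
  have Vm: "V \<in> measurable (PiM UNIV (\<lambda>_. N)) borel"
  proof (unfold V_def, rule borel_measurable_vec)
    fix j :: 'd
    have "(\<lambda>x. x j) \<in> measurable (PiM UNIV (\<lambda>_. N)) N" by (rule measurable_component_singleton) simp
    then show "(\<lambda>x. (\<chi> j. x j) $ j) \<in> borel_measurable (PiM UNIV (\<lambda>_. N))"
      by (simp add: measurable_cong_sets[OF refl setsN])
  qed
  have sP: "sets (PiM UNIV (\<lambda>_::nat\<times>'d. N)) = sets (PiM UNIV (\<lambda>_. borel))"
    by (rule sets_PiM_cong) (auto simp: setsN)
  have gen: "distr M borel (n i) = distr (PiM UNIV (\<lambda>_::'d. N)) borel V" for i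
  proof -
    define \<rho> where "\<rho> f = (\<lambda>j\<in>UNIV. f (i, j))" for f :: "nat \<times> 'd \<Rightarrow> real"
    have \<rho>m: "\<rho> \<in> measurable (PiM UNIV (\<lambda>_. N)) (PiM UNIV (\<lambda>_. N))"
      unfolding \<rho>_def by (intro measurable_restrict measurable_component_singleton) auto
    have \<rho>m': "\<rho> \<in> measurable (PiM UNIV (\<lambda>_. borel)) (PiM UNIV (\<lambda>_. N))"
      using \<rho>m by (simp add: measurable_cong_sets[OF sP refl])
    have eqn: "n i = (\<lambda>\<omega>. V (\<rho> (T \<omega>)))"
      by (auto simp: V_def \<rho>_def T_def X_def vec_eq_iff)
    have "distr M borel (n i) = distr M borel ((V \<circ> \<rho>) \<circ> T)"
      by (simp add: eqn o_def)
    also have "\<dots> = distr (distr M (PiM UNIV (\<lambda>_. borel)) T) borel (V \<circ> \<rho>)"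
      by (rule distr_distr[symmetric]) (use Tm \<rho>m' Vm in auto)
    also have "\<dots> = distr (PiM UNIV (\<lambda>_. N)) borel (V \<circ> \<rho>)"
      by (simp add: P)
    also have "\<dots> = distr (distr (PiM UNIV (\<lambda>_. N)) (PiM UNIV (\<lambda>_. N)) \<rho>) borel V"
      by (rule distr_distr[symmetric]) (use \<rho>m Vm in auto)
    also have "distr (PiM UNIV (\<lambda>_. N)) (PiM UNIV (\<lambda>_. N)) \<rho> = PiM UNIV (\<lambda>_::'d. N)"
      unfolding \<rho>_def using distr_PiM_reindex[of UNIV "\<lambda>_. N" "\<lambda>j. (i, j)" UNIV] probN
      by (auto simp: inj_on_def)
    finally show ?thesis .
  qed
  show ?thesis using gen[of i] gen[of 0] by simp
qed

lemma law_integral: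
  fixes h :: "real^'d \<Rightarrow> real"
  assumes h: "h \<in> borel_measurable borel"
  shows "expectation (\<lambda>\<omega>. h (n i \<omega>)) = expectation (\<lambda>\<omega>. h (n 0 \<omega>))"
    and "integrable M (\<lambda>\<omega>. h (n i \<omega>)) \<longleftrightarrow> integrable M (\<lambda>\<omega>. h (n 0 \<omega>))"
proof -
  show "expectation (\<lambda>\<omega>. h (n i \<omega>)) = expectation (\<lambda>\<omega>. h (n 0 \<omega>))"
    using integral_distr[OF n_meas h, of i] integral_distr[OF n_meas h, of 0] law_eq[of i] by simp
  show "integrable M (\<lambda>\<omega>. h (n i \<omega>)) \<longleftrightarrow> integrable M (\<lambda>\<omega>. h (n 0 \<omega>))"
    using integrable_distr_eq[OF n_meas h, of i] integrable_distr_eq[OF n_meas h, of 0] law_eq[of i] by simp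
qed

end

context gsetup begin

definition Zc :: "nat \<Rightarrow> 'd \<Rightarrow> 'w \<Rightarrow> real" where "Zc i j \<omega> = n i \<omega> $ j"
definition Wc :: "nat \<Rightarrow> 'd \<Rightarrow> 'w \<Rightarrow> real^'d" where
  "Wc i j \<omega> = (\<chi> j'. if j' = j then 0 else n i \<omega> $ j')"

definition Zv :: "nat \<Rightarrow> 'd \<Rightarrow> 'w \<Rightarrow> real^'d" where "Zv i j \<omega> = Zc i j \<omega> *\<^sub>R axis j 1"

lemma Zc_meas[measurable]: "Zc i j \<in> borel_measurable M"
  unfolding Zc_def[abs_def] by simp

lemma Zv_meas[measurable]: "Zv i j \<in> borel_measurable M"
  unfolding Zv_def[abs_def] by simp

lemma Wc_meas[measurable]: "Wc i j \<in> borel_measurable M"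
  unfolding Wc_def[abs_def] by (rule borel_measurable_vec) simp

lemma n_decomp: "n i \<omega> = Wc i j \<omega> + Zv i j \<omega>"
  by (auto simp: vec_eq_iff Wc_def Zc_def Zv_def axis_def)

lemma indep_ZW: "indep_var borel (Zv i j) borel (Wc i j)"
proof -
  define X where "X = (\<lambda>(i, j) \<omega>. n i \<omega> $ j :: real)"
  define A where "A = {(i, j)}"
  define B where "B = {(i, j') | j'. j' \<noteq> j}"
  have "indep_var (PiM A (\<lambda>_. borel)) (\<lambda>\<omega>. restrict (\<lambda>k. X k \<omega>) A) (PiM B (\<lambda>_. borel)) (\<lambda>\<omega>. restrict (\<lambda>k. X k \<omega>) B)"
    by (rule indep_var_restrict[OF ind[folded X_def]]) (auto simp: A_def B_def)
  moreover have mA: "(\<lambda>f. f (i, j) *\<^sub>R (axis j 1 :: real^'d)) \<in> borel_measurable (PiM A (\<lambda>_. borel :: real measure))"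
  proof -
    have "(\<lambda>f. f (i, j)) \<in> borel_measurable (PiM A (\<lambda>_. borel :: real measure))"
      by (rule measurable_component_singleton) (simp add: A_def)
    then show ?thesis by measurable
  qed
  moreover have mB: "(\<lambda>f. \<chi> j'. if j' = j then 0 else f (i, j')) \<in> borel_measurable (PiM B (\<lambda>_. borel :: real measure))"
  proof (rule borel_measurable_vec)
    fix j' :: 'd
    show "(\<lambda>f. (\<chi> j'. if j' = j then 0 else f (i, j')) $ j') \<in> borel_measurable (PiM B (\<lambda>_. borel :: real measure))"
    proof (cases "j' = j")
      case True then show ?thesis by simp
    next
      case False
      then have "(\<lambda>f. f (i, j')) \<in> borel_measurable (PiM B (\<lambda>_. borel :: real measure))"
        by (intro measurable_component_singleton) (simp add: B_def)
      then show ?thesis using False by simp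
    qed
  qed
  ultimately have "indep_var borel ((\<lambda>f. f (i, j) *\<^sub>R (axis j 1 :: real^'d)) \<circ> (\<lambda>\<omega>. restrict (\<lambda>k. X k \<omega>) A))
      borel ((\<lambda>f. \<chi> j'. if j' = j then 0 else f (i, j')) \<circ> (\<lambda>\<omega>. restrict (\<lambda>k. X k \<omega>) B))"
    by (rule indep_var_compose)
  moreover have "(\<lambda>f. f (i, j) *\<^sub>R (axis j 1 :: real^'d)) \<circ> (\<lambda>\<omega>. restrict (\<lambda>k. X k \<omega>) A) = Zv i j"
    by (auto simp: A_def X_def Zc_def Zv_def)
  moreover have "(\<lambda>f. \<chi> j'. if j' = j then 0 else f (i, j')) \<circ> (\<lambda>\<omega>. restrict (\<lambda>k. X k \<omega>) B) = Wc i j"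
    by (auto simp: B_def X_def Wc_def vec_eq_iff)
  ultimately show ?thesis by simp
qed

lemma decomp:
  fixes f :: "(real^'d) \<times> (real^'d) \<Rightarrow> real"
  assumes f: "f \<in> borel_measurable borel"
    and int: "integrable M (\<lambda>\<omega>. f (Zv i j \<omega>, Wc i j \<omega>))"
  shows "expectation (\<lambda>\<omega>. f (Zv i j \<omega>, Wc i j \<omega>)) =
    (\<integral>w. (\<integral>t. std_normal_density t * f (t *\<^sub>R axis j 1, w) \<partial>lborel) \<partial>(distr M borel (Wc i j)))"
proof -
  define N where "N = distr M borel (Zv i j)"
  define LW where "LW = distr M borel (Wc i j)"
  interpret N: prob_space N unfolding N_def by (rule prob_space_distr) simp
  interpret LW: prob_space LW unfolding LW_def by (rule prob_space_distr) simp
  interpret NW: pair_prob_space N LW ..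
  have fm: "f \<in> borel_measurable (borel \<Otimes>\<^sub>M borel)" using f by (simp add: borel_prod)
  have pm: "(\<lambda>\<omega>. (Zv i j \<omega>, Wc i j \<omega>)) \<in> measurable M (borel \<Otimes>\<^sub>M borel)" by measurable
  have jd: "N \<Otimes>\<^sub>M LW = distr M (borel \<Otimes>\<^sub>M borel) (\<lambda>\<omega>. (Zv i j \<omega>, Wc i j \<omega>))"
    using indep_var_distribution_eq[THEN iffD1, OF indep_ZW[of i j]] by (simp add: N_def LW_def)
  have "expectation (\<lambda>\<omega>. f (Zv i j \<omega>, Wc i j \<omega>)) = integral\<^sup>L (N \<Otimes>\<^sub>M LW) f"
    unfolding jd by (rule integral_distr[symmetric, OF pm fm])
  moreover have intP: "integrable (N \<Otimes>\<^sub>M LW) f"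
    unfolding jd using integrable_distr_eq[OF pm fm] int by simp
  moreover have "integral\<^sup>L (N \<Otimes>\<^sub>M LW) f = (\<integral>w. (\<integral>t. f (t, w) \<partial>N) \<partial>LW)"
    using NW.integral_snd[of "\<lambda>t w. f (t, w)"] intP by simp
  moreover have "(\<integral>t. f (t, w) \<partial>N) = (\<integral>t. std_normal_density t * f (t *\<^sub>R axis j 1, w) \<partial>lborel)" for w
  proof -
    have m1: "(\<lambda>t. f (t, w)) \<in> borel_measurable borel" using fm by measurable
    have m2: "(\<lambda>t. f (t *\<^sub>R axis j 1, w)) \<in> borel_measurable borel" using fm by measurable
    have "(\<integral>t. f (t, w) \<partial>N) = expectation (\<lambda>\<omega>. f (Zv i j \<omega>, w))"
      unfolding N_def by (rule integral_distr) (use m1 in auto)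
    also have "\<dots> = expectation (\<lambda>\<omega>. (\<lambda>t. f (t *\<^sub>R axis j 1, w)) (n i \<omega> $ j))"
      by (simp add: Zv_def Zc_def)
    also have "\<dots> = (\<integral>t. std_normal_density t * f (t *\<^sub>R axis j 1, w) \<partial>lborel)"
      by (rule coord_integral[OF m2])
    finally show ?thesis .
  qed
  ultimately show ?thesis by (simp add: LW_def)
qed

end

lemma vec_axis_sum: "(\<Sum>j\<in>UNIV. (u $ j) *\<^sub>R axis j (1::real)) = (u :: real^'d)"
proof -
  have "(\<Sum>j\<in>UNIV. (u $ j) * (axis j 1 $ k)) = u $ k" for k
  proof -
    have "(\<Sum>j\<in>UNIV. (u $ j) * (axis j 1 $ k)) = (\<Sum>j\<in>{k}. (u $ j) * (axis j 1 $ k))"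
      by (intro sum.mono_neutral_right) (auto simp: axis_def)
    then show ?thesis by (simp add: axis_def)
  qed
  then show ?thesis by (simp add: vec_eq_iff sum_component)
qed

context gsetup begin

lemma stein_coord:
  fixes F :: "real^'d \<Rightarrow> real" and Fd :: "real^'d \<Rightarrow> real^'d \<Rightarrow> real"
  assumes deriv: "\<And>v. (F has_derivative Fd v) (at v)"
    and contd: "\<And>h. continuous_on UNIV (\<lambda>v. Fd v h)"
    and bF: "\<And>v. \<bar>F v\<bar> \<le> 1" and bFd: "\<And>v. \<bar>Fd v (axis j 1)\<bar> \<le> K"
  shows "expectation (\<lambda>\<omega>. n i \<omega> $ j * F (n i \<omega>)) = expectation (\<lambda>\<omega>. Fd (n i \<omega>) (axis j 1))"
proof -
  define e :: "real^'d" where "e = axis j 1"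
  have Fc: "continuous_on UNIV F"
    by (intro continuous_at_imp_continuous_on ballI has_derivative_continuous[OF deriv])
  define f1 where "f1 p = fst p $ j * F (snd p + fst p)" for p :: "(real^'d) \<times> (real^'d)"
  define f2 where "f2 p = Fd (snd p + fst p) e" for p :: "(real^'d) \<times> (real^'d)"
  have c0: "continuous_on UNIV (\<lambda>p::(real^'d) \<times> (real^'d). snd p + fst p)"
    by (intro continuous_intros)
  have f1m: "f1 \<in> borel_measurable borel"
  proof -
    have "continuous_on UNIV f1" unfolding f1_def
      by (intro continuous_intros continuous_on_compose2[OF Fc c0]) auto
    then show ?thesis by (rule borel_measurable_continuous_onI)
  qed
  have f2m: "f2 \<in> borel_measurable borel"
  proof -
    have "continuous_on UNIV f2" unfolding f2_def
      by (intro continuous_on_compose2[OF contd c0]) auto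
    then show ?thesis by (rule borel_measurable_continuous_onI)
  qed
  have nd: "Wc i j \<omega> + Zv i j \<omega> = n i \<omega>" for \<omega> by (rule n_decomp[symmetric])
  have zj: "Zv i j \<omega> $ j = n i \<omega> $ j" for \<omega> by (simp add: Zv_def Zc_def)
  have e1: "expectation (\<lambda>\<omega>. n i \<omega> $ j * F (n i \<omega>)) = expectation (\<lambda>\<omega>. f1 (Zv i j \<omega>, Wc i j \<omega>))"
    by (rule Bochner_Integration.integral_cong) (auto simp: f1_def nd zj)
  have e2: "expectation (\<lambda>\<omega>. Fd (n i \<omega>) (axis j 1)) = expectation (\<lambda>\<omega>. f2 (Zv i j \<omega>, Wc i j \<omega>))"
    by (rule Bochner_Integration.integral_cong) (auto simp: f2_def e_def nd)
  have i1: "integrable M (\<lambda>\<omega>. f1 (Zv i j \<omega>, Wc i j \<omega>))"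
  proof (rule Bochner_Integration.integrable_bound[OF coord_int_abs[of i j]])
    show "(\<lambda>\<omega>. f1 (Zv i j \<omega>, Wc i j \<omega>)) \<in> borel_measurable M" using f1m by measurable
    show "AE \<omega> in M. norm (f1 (Zv i j \<omega>, Wc i j \<omega>)) \<le> norm \<bar>n i \<omega> $ j\<bar>"
    proof (intro AE_I2)
      fix \<omega>
      have "\<bar>n i \<omega> $ j * F (Wc i j \<omega> + Zv i j \<omega>)\<bar> \<le> \<bar>n i \<omega> $ j\<bar> * 1"
        unfolding abs_mult by (intro mult_left_mono bF) auto
      then show "norm (f1 (Zv i j \<omega>, Wc i j \<omega>)) \<le> norm \<bar>n i \<omega> $ j\<bar>"
        by (simp add: f1_def Zv_def Zc_def)
    qed
  qed
  have i2: "integrable M (\<lambda>\<omega>. f2 (Zv i j \<omega>, Wc i j \<omega>))"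
  proof (rule integrable_const_bound[where B=K])
    show "AE \<omega> in M. norm (f2 (Zv i j \<omega>, Wc i j \<omega>)) \<le> K" using bFd by (simp add: f2_def e_def)
    show "(\<lambda>\<omega>. f2 (Zv i j \<omega>, Wc i j \<omega>)) \<in> borel_measurable M" using f2m by measurable
  qed
  have inner: "(\<integral>t. std_normal_density t * f1 (t *\<^sub>R e, w) \<partial>lborel) =
      (\<integral>t. std_normal_density t * f2 (t *\<^sub>R e, w) \<partial>lborel)" for w
  proof -
    define g where "g t = F (w + t *\<^sub>R e)" for t
    define g' where "g' t = Fd (w + t *\<^sub>R e) e" for t
    have "(\<integral>t. std_normal_density t * (t * g t) \<partial>lborel) = (\<integral>t. std_normal_density t * g' t \<partial>lborel)"
    proof (rule stein_1d[where B="max 1 K"])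
      fix t
      have d1: "((\<lambda>t. w + t *\<^sub>R e) has_derivative (\<lambda>s. s *\<^sub>R e)) (at t)"
        by (auto intro!: derivative_eq_intros)
      have "((\<lambda>t. F (w + t *\<^sub>R e)) has_derivative (\<lambda>s. Fd (w + t *\<^sub>R e) (s *\<^sub>R e))) (at t)"
        by (rule has_derivative_compose[OF d1 deriv])
      moreover have "Fd (w + t *\<^sub>R e) (s *\<^sub>R e) = g' t * s" for s
        using linear_cmul[OF bounded_linear.linear[OF has_derivative_bounded_linear[OF deriv]]]
        by (simp add: g'_def)
      ultimately have D: "((\<lambda>t. F (w + t *\<^sub>R e)) has_derivative (*) (g' t)) (at t)" by simp
      show "(g has_real_derivative g' t) (at t)"
        unfolding has_field_derivative_def g_def using D by simp
      have "continuous_on UNIV g'" unfolding g'_def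
        by (intro continuous_on_compose2[OF contd] continuous_intros) auto
      then show "isCont g' t" by (simp add: continuous_on_eq_continuous_at)
      show "\<bar>g t\<bar> \<le> max 1 K" using bF[of "w + t *\<^sub>R e"] by (simp add: g_def)
      show "\<bar>g' t\<bar> \<le> max 1 K" using bFd[of "w + t *\<^sub>R e"] by (simp add: g'_def e_def)
    qed
    then show ?thesis by (simp add: f1_def f2_def g_def g'_def e_def add.commute)
  qed
  show ?thesis
    unfolding e1 e2 decomp[OF f1m i1] decomp[OF f2m i2] using inner[unfolded e_def] by simp
qed

lemma stein_zero:
  fixes F :: "real^'d \<Rightarrow> real" and Fd :: "real^'d \<Rightarrow> real^'d \<Rightarrow> real"
  assumes deriv: "\<And>v. (F has_derivative Fd v) (at v)"
    and contd: "\<And>h. continuous_on UNIV (\<lambda>v. Fd v h)"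
    and bF: "\<And>v. \<bar>F v\<bar> \<le> 1" and bFd: "\<And>v j. \<bar>Fd v (axis j 1)\<bar> \<le> K"
    and zero: "\<And>v. Fd v u = 0"
  shows "expectation (\<lambda>\<omega>. (n i \<omega> \<bullet> u) * F (n i \<omega>)) = 0"
proof -
  have Fc: "continuous_on UNIV F"
    by (intro continuous_at_imp_continuous_on ballI has_derivative_continuous[OF deriv])
  have Fm[measurable]: "F \<in> borel_measurable borel" using Fc by (rule borel_measurable_continuous_onI)
  have Fdm[measurable]: "(\<lambda>v. Fd v h) \<in> borel_measurable borel" for h
    using contd by (rule borel_measurable_continuous_onI)
  have lin: "linear (Fd v)" for v
    by (rule bounded_linear.linear[OF has_derivative_bounded_linear[OF deriv]])
  have int1: "integrable M (\<lambda>\<omega>. n i \<omega> $ j * F (n i \<omega>))" for j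
  proof (rule Bochner_Integration.integrable_bound[OF coord_int_abs[of i j]])
    show "(\<lambda>\<omega>. n i \<omega> $ j * F (n i \<omega>)) \<in> borel_measurable M" by measurable
    show "AE \<omega> in M. norm (n i \<omega> $ j * F (n i \<omega>)) \<le> norm \<bar>n i \<omega> $ j\<bar>"
    proof (intro AE_I2)
      fix \<omega>
      have "\<bar>n i \<omega> $ j * F (n i \<omega>)\<bar> \<le> \<bar>n i \<omega> $ j\<bar> * 1"
        unfolding abs_mult by (intro mult_left_mono bF) auto
      then show "norm (n i \<omega> $ j * F (n i \<omega>)) \<le> norm \<bar>n i \<omega> $ j\<bar>" by simp
    qed
  qed
  have int2: "integrable M (\<lambda>\<omega>. Fd (n i \<omega>) (axis j 1))" for j
    by (rule integrable_const_bound[where B=K]) (use bFd in auto)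
  have "expectation (\<lambda>\<omega>. (n i \<omega> \<bullet> u) * F (n i \<omega>)) =
      expectation (\<lambda>\<omega>. \<Sum>j\<in>UNIV. u $ j * (n i \<omega> $ j * F (n i \<omega>)))"
    by (rule Bochner_Integration.integral_cong) (auto simp: inner_vec_def sum_distrib_left ac_simps)
  also have "\<dots> = (\<Sum>j\<in>UNIV. u $ j * expectation (\<lambda>\<omega>. n i \<omega> $ j * F (n i \<omega>)))"
    using int1 by (simp add: Bochner_Integration.integral_sum)
  also have "\<dots> = (\<Sum>j\<in>UNIV. u $ j * expectation (\<lambda>\<omega>. Fd (n i \<omega>) (axis j 1)))"
    using stein_coord[OF deriv contd bF bFd] by simp
  also have "\<dots> = expectation (\<lambda>\<omega>. \<Sum>j\<in>UNIV. u $ j * Fd (n i \<omega>) (axis j 1))"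
    using int2 by (simp add: Bochner_Integration.integral_sum)
  also have "\<dots> = expectation (\<lambda>\<omega>. Fd (n i \<omega>) u)"
  proof (rule Bochner_Integration.integral_cong[OF refl])
    fix \<omega>
    have "Fd (n i \<omega>) u = Fd (n i \<omega>) (\<Sum>j\<in>UNIV. (u $ j) *\<^sub>R axis j 1)" by (simp add: vec_axis_sum)
    also have "\<dots> = (\<Sum>j\<in>UNIV. u $ j * Fd (n i \<omega>) (axis j 1))"
      using lin[of "n i \<omega>"] by (simp add: linear_sum linear_cmul)
    finally show "(\<Sum>j\<in>UNIV. u $ j * Fd (n i \<omega>) (axis j 1)) = Fd (n i \<omega>) u" by simp
  qed
  also have "\<dots> = 0" by (simp add: zero)
  finally show ?thesis .
qed

end

definition smx :: "nat \<Rightarrow> (nat \<Rightarrow> real^'d) \<Rightarrow> (nat \<Rightarrow> real) \<Rightarrow> nat \<Rightarrow> real^'d \<Rightarrow> real" where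
  "smx L y c l v = exp (v \<bullet> y l + c l) / (\<Sum>r<L. exp (v \<bullet> y r + c r))"

definition smxd :: "nat \<Rightarrow> (nat \<Rightarrow> real^'d) \<Rightarrow> (nat \<Rightarrow> real) \<Rightarrow> nat \<Rightarrow> real^'d \<Rightarrow> real^'d \<Rightarrow> real" where
  "smxd L y c l v h = smx L y c l v * (h \<bullet> y l - (\<Sum>r<L. smx L y c r v * (h \<bullet> y r)))"

lemma smx_den_pos: "0 < (L::nat) \<Longrightarrow> 0 < (\<Sum>r<L. exp (v \<bullet> y r + c r))"
  by (intro sum_pos) auto

lemma smx_nonneg: "0 \<le> smx L y c l v"
  unfolding smx_def by (intro divide_nonneg_nonneg sum_nonneg) auto

lemma smx_le1: "l < L \<Longrightarrow> smx L y c l v \<le> 1"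
  unfolding smx_def
  by (subst divide_le_eq_1) (auto intro!: member_le_sum smx_den_pos)

lemma smx_deriv:
  assumes L: "0 < L"
  shows "(smx L y c l has_derivative smxd L y c l v) (at v)"
proof -
  define D where "D v = (\<Sum>r<L. exp (v \<bullet> y r + c r))" for v
  have Dp: "0 < D v" for v unfolding D_def using smx_den_pos[OF L] .
  have dN: "((\<lambda>v. exp (v \<bullet> y l + c l)) has_derivative (\<lambda>h. exp (v \<bullet> y l + c l) * (h \<bullet> y l))) (at v)"
    by (auto intro!: derivative_eq_intros simp: inner_commute)
  have dD: "(D has_derivative (\<lambda>h. \<Sum>r<L. exp (v \<bullet> y r + c r) * (h \<bullet> y r))) (at v)"
    unfolding D_def by (auto intro!: derivative_eq_intros simp: inner_commute mult.commute)
  have "((\<lambda>v. exp (v \<bullet> y l + c l) / D v) has_derivative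
     (\<lambda>h. - exp (v \<bullet> y l + c l) * (inverse (D v) * (\<Sum>r<L. exp (v \<bullet> y r + c r) * (h \<bullet> y r)) * inverse (D v))
          + exp (v \<bullet> y l + c l) * (h \<bullet> y l) / D v)) (at v)"
    by (rule has_derivative_divide[OF dN dD]) (use Dp in \<open>simp add: less_imp_neq[symmetric]\<close>)
  moreover have "(\<lambda>h. - exp (v \<bullet> y l + c l) * (inverse (D v) * (\<Sum>r<L. exp (v \<bullet> y r + c r) * (h \<bullet> y r)) * inverse (D v))
          + exp (v \<bullet> y l + c l) * (h \<bullet> y l) / D v) = smxd L y c l v"
  proof
    fix h
    have "(\<Sum>r<L. smx L y c r v * (h \<bullet> y r)) = (\<Sum>r<L. exp (v \<bullet> y r + c r) * (h \<bullet> y r)) / D v"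
      unfolding smx_def D_def[symmetric] by (simp add: sum_divide_distrib)
    note e1 = this
    have e2: "smx L y c l v = exp (v \<bullet> y l + c l) / D v" by (simp add: smx_def D_def)
    have alg: "\<And>a S Dv hl::real. Dv \<noteq> 0 \<Longrightarrow> - a * (inverse Dv * S * inverse Dv) + a * hl / Dv = a / Dv * (hl - S / Dv)"
      by (simp add: divide_inverse algebra_simps)
    show "- exp (v \<bullet> y l + c l) * (inverse (D v) * (\<Sum>r<L. exp (v \<bullet> y r + c r) * (h \<bullet> y r)) * inverse (D v))
          + exp (v \<bullet> y l + c l) * (h \<bullet> y l) / D v = smxd L y c l v h"
      unfolding smxd_def e1 e2 by (rule alg) (use Dp[of v] in simp)
  qed
  ultimately show ?thesis unfolding smx_def[abs_def] D_def by simp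
qed

lemma smx_cont:
  assumes "0 < L" shows "continuous_on UNIV (smx L y c l)"
proof -
  have "(\<Sum>r<L. exp (v \<bullet> y r + c r)) \<noteq> 0" for v using smx_den_pos[OF assms, of v y c] by simp
  then show ?thesis unfolding smx_def[abs_def] by (intro continuous_intros) auto
qed

lemma smxd_cont:
  assumes "0 < L" shows "continuous_on UNIV (\<lambda>v. smxd L y c l v h)"
  unfolding smxd_def by (intro continuous_intros smx_cont[OF assms, unfolded comp_def])

lemma smxd_bound:
  assumes "l < L"
  shows "\<bar>smxd L y c l v h\<bar> \<le> \<bar>h \<bullet> y l\<bar> + (\<Sum>r<L. \<bar>h \<bullet> y r\<bar>)"
proof -
  have s: "\<bar>smx L y c l v\<bar> \<le> 1" using smx_nonneg[of L y c l v] smx_le1[OF assms, of y c v] by simp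
  have "\<bar>\<Sum>r<L. smx L y c r v * (h \<bullet> y r)\<bar> \<le> (\<Sum>r<L. \<bar>smx L y c r v * (h \<bullet> y r)\<bar>)"
    by (rule sum_abs)
  also have "\<dots> \<le> (\<Sum>r<L. \<bar>h \<bullet> y r\<bar>)"
  proof (rule sum_mono)
    fix r assume "r \<in> {..<L}"
    then have "\<bar>smx L y c r v\<bar> \<le> 1" using smx_nonneg[of L y c r v] smx_le1[of r L y c v] by simp
    then show "\<bar>smx L y c r v * (h \<bullet> y r)\<bar> \<le> \<bar>h \<bullet> y r\<bar>"
      unfolding abs_mult by (metis abs_ge_zero mult_left_le_one_le mult.commute)
  qed
  finally have t: "\<bar>\<Sum>r<L. smx L y c r v * (h \<bullet> y r)\<bar> \<le> (\<Sum>r<L. \<bar>h \<bullet> y r\<bar>)" .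
  have "\<bar>smxd L y c l v h\<bar> \<le> 1 * \<bar>h \<bullet> y l - (\<Sum>r<L. smx L y c r v * (h \<bullet> y r))\<bar>"
    unfolding smxd_def abs_mult by (intro mult_right_mono s) auto
  also have "\<dots> \<le> \<bar>h \<bullet> y l\<bar> + (\<Sum>r<L. \<bar>h \<bullet> y r\<bar>)" using t by simp
  finally show ?thesis .
qed

lemma smxd_zero: "(\<And>r. r < L \<Longrightarrow> u \<bullet> y r = 0) \<Longrightarrow> l < L \<Longrightarrow> smxd L y c l v u = 0"
  unfolding smxd_def by simp

context gsetup begin

lemma smx_orth:
  assumes L: "l < L" and orth: "\<And>r. r < L \<Longrightarrow> u \<bullet> y r = 0"
  shows "expectation (\<lambda>\<omega>. (n i \<omega> \<bullet> u) * smx L y c l (n i \<omega>)) = 0"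
proof (rule stein_zero[where Fd="smxd L y c l"])
  show "(smx L y c l has_derivative smxd L y c l v) (at v)" for v using L by (intro smx_deriv) simp
  show "continuous_on UNIV (\<lambda>v. smxd L y c l v h)" for h using L by (intro smxd_cont) simp
  show "\<bar>smx L y c l v\<bar> \<le> 1" for v using smx_nonneg[of L y c l v] smx_le1[OF L] by simp
  show "\<bar>smxd L y c l v (axis j 1)\<bar> \<le> (\<Sum>jj\<in>UNIV. \<bar>axis jj 1 \<bullet> y l\<bar> + (\<Sum>r<L. \<bar>axis jj 1 \<bullet> y r\<bar>))" for v j
  proof -
    have "\<bar>smxd L y c l v (axis j 1)\<bar> \<le> \<bar>axis j 1 \<bullet> y l\<bar> + (\<Sum>r<L. \<bar>axis j 1 \<bullet> y r\<bar>)"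
      by (rule smxd_bound[OF L])
    also have "\<dots> \<le> (\<Sum>jj\<in>UNIV. \<bar>axis jj 1 \<bullet> y l\<bar> + (\<Sum>r<L. \<bar>axis jj 1 \<bullet> y r\<bar>))"
      by (rule member_le_sum[where f="\<lambda>jj. \<bar>axis jj 1 \<bullet> y l\<bar> + (\<Sum>r<L. \<bar>axis jj 1 \<bullet> y r\<bar>)"])
         (auto intro: add_nonneg_nonneg sum_nonneg)
    finally show ?thesis .
  qed
  show "smxd L y c l v u = 0" for v using orth L by (rule smxd_zero)
qed

end

lemma hard_assign_props:
  fixes x :: "nat \<Rightarrow> real^'d"
  assumes L: "0 < L"
  shows "hard_assign x L v < L" "\<And>r. r < L \<Longrightarrow> v \<bullet> x r \<le> v \<bullet> x (hard_assign x L v)"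
    "\<And>r. r < L \<Longrightarrow> v \<bullet> x (hard_assign x L v) \<le> v \<bullet> x r \<Longrightarrow> hard_assign x L v \<le> r"
proof -
  define P where "P l = (l < L \<and> (\<forall>r<L. v \<bullet> x r \<le> v \<bullet> x l))" for l
  have ex: "\<exists>l. P l"
  proof -
    have fin: "finite ((\<lambda>r. v \<bullet> x r) ` {..<L})" by simp
    have ne: "(\<lambda>r. v \<bullet> x r) ` {..<L} \<noteq> {}" using L by auto
    obtain l where l: "l < L" "v \<bullet> x l = Max ((\<lambda>r. v \<bullet> x r) ` {..<L})"
      using Max_in[OF fin ne] by auto
    then show ?thesis unfolding P_def using Max_ge[OF fin] by (intro exI[of _ l]) auto
  qed
  have h: "hard_assign x L v = (LEAST l. P l)" unfolding hard_assign_def P_def ..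
  have Pm: "P (hard_assign x L v)" unfolding h using ex by (rule LeastI_ex)
  then show "hard_assign x L v < L" "\<And>r. r < L \<Longrightarrow> v \<bullet> x r \<le> v \<bullet> x (hard_assign x L v)"
    unfolding P_def by auto
  fix r assume r: "r < L" "v \<bullet> x (hard_assign x L v) \<le> v \<bullet> x r"
  have "P r" using r Pm unfolding P_def by force
  then show "hard_assign x L v \<le> r" unfolding h by (rule Least_le)
qed

lemma smx_hard_lim:
  fixes x :: "nat \<Rightarrow> real^'d"
  assumes l: "l < L"
  shows "(\<lambda>k::nat. smx L (\<lambda>r. real k *\<^sub>R x r) (\<lambda>r. - sqrt (real k) * real r) l v)
          \<longlonglongrightarrow> (if hard_assign x L v = l then 1 else 0)"
proof -
  have L: "0 < L" using l by simp
  define z where "z r = v \<bullet> x r" for r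
  define T where "T r kk = exp (real kk * (z r - z l) + sqrt (real kk) * (real l - real r))" for r and kk :: nat
  have eq: "smx L (\<lambda>r. real k *\<^sub>R x r) (\<lambda>r. - sqrt (real k) * real r) l v = 1 / (\<Sum>r<L. T r k)" for k
  proof -
    have t: "T r k = exp (v \<bullet> (real k *\<^sub>R x r) + - sqrt (real k) * real r) / exp (v \<bullet> (real k *\<^sub>R x l) + - sqrt (real k) * real l)" for r
      unfolding T_def z_def exp_diff[symmetric] by (simp add: algebra_simps)
    have "(\<Sum>r<L. T r k) = (\<Sum>r<L. exp (v \<bullet> (real k *\<^sub>R x r) + - sqrt (real k) * real r)) /
              exp (v \<bullet> (real k *\<^sub>R x l) + - sqrt (real k) * real l)"
      unfolding sum_divide_distrib t ..
    then show ?thesis unfolding smx_def by simp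
  qed
  define m where "m = hard_assign x L v"
  have m: "m < L" "\<And>r. r < L \<Longrightarrow> z r \<le> z m" "\<And>r. r < L \<Longrightarrow> z m \<le> z r \<Longrightarrow> m \<le> r"
    using hard_assign_props[OF L, where x=x and v=v] by (auto simp: m_def z_def)
  have main: "(\<lambda>k. 1 / (\<Sum>r<L. T r k)) \<longlonglongrightarrow> (if m = l then 1 else 0)"
  proof (cases "m = l")
    case True
    have lim: "(\<lambda>k. T r k) \<longlonglongrightarrow> (if r = l then 1 else 0)" if r: "r < L" for r
    proof (cases "r = l")
      case True then show ?thesis by (simp add: T_def)
    next
      case False
      have zr: "z r \<le> z l" using m(2)[OF r] \<open>m = l\<close> by simp
      show ?thesis
      proof (cases "z r = z l")
        case True
        then have "r > l" using m(3)[OF r] \<open>m = l\<close> False by force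
        then have neg: "real l - real r < 0" by simp
        have "(\<lambda>k::nat. exp (sqrt (real k) * (real l - real r))) \<longlonglongrightarrow> 0"
          using neg by real_asymp
        then show ?thesis using True False by (simp add: T_def)
      next
        case ne: False
        then have neg: "z r - z l < 0" using zr by simp
        have "(\<lambda>k::nat. exp (real k * (z r - z l) + sqrt (real k) * (real l - real r))) \<longlonglongrightarrow> 0"
          using neg by real_asymp
        then show ?thesis using False by (simp add: T_def)
      qed
    qed
    have "(\<lambda>k. \<Sum>r<L. T r k) \<longlonglongrightarrow> (\<Sum>r<L. if r = l then 1 else 0)"
      by (intro tendsto_sum lim) simp
    also have "(\<Sum>r<L. if r = l then 1 else (0::real)) = 1" using l by simp
    finally have "(\<lambda>k. 1 / (\<Sum>r<L. T r k)) \<longlonglongrightarrow> 1 / 1"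
      by (intro tendsto_divide tendsto_const) auto
    then show ?thesis using True by simp
  next
    case False
    have zl: "z l \<le> z m" using m(2)[OF l] .
    have Tm: "filterlim (\<lambda>k. T m k) at_top sequentially"
    proof (cases "z m = z l")
      case True
      then have "m \<le> l" using m(3)[OF l] by simp
      then have pos: "real l - real m > 0" using False by simp
      have "filterlim (\<lambda>k::nat. exp (sqrt (real k) * (real l - real m))) at_top sequentially"
        using pos by real_asymp
      then show ?thesis using True by (simp add: T_def)
    next
      case ne: False
      then have pos: "z m - z l > 0" using zl by simp
      show ?thesis unfolding T_def using pos by real_asymp
    qed
    have "filterlim (\<lambda>k. \<Sum>r<L. T r k) at_top sequentially"
    proof (rule filterlim_at_top_mono[OF Tm])
      show "eventually (\<lambda>k. T m k \<le> (\<Sum>r<L. T r k)) sequentially"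
        using m(1) by (intro always_eventually allI member_le_sum) (auto simp: T_def)
    qed
    then have "(\<lambda>k. inverse (\<Sum>r<L. T r k)) \<longlonglongrightarrow> 0"
      by (rule tendsto_inverse_0_at_top)
    then show ?thesis using False by (simp add: divide_inverse)
  qed
  show ?thesis unfolding eq using main by (simp add: m_def)
qed


lemma hard_ind_meas:
  fixes x :: "nat \<Rightarrow> real^'d"
  assumes l: "l < L"
  shows "(\<lambda>v. if hard_assign x L v = l then 1 else 0 :: real) \<in> borel_measurable borel"
proof (rule borel_measurable_LIMSEQ_real[OF smx_hard_lim[OF l]])
  fix k :: nat
  show "smx L (\<lambda>r. real k *\<^sub>R x r) (\<lambda>r. - sqrt (real k) * real r) l \<in> borel_measurable borel"
    using l by (intro borel_measurable_continuous_onI smx_cont) simp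
qed

context gsetup begin

lemma inner_int: "integrable M (\<lambda>\<omega>. \<bar>n i \<omega> \<bullet> u\<bar>)"
proof (rule Bochner_Integration.integrable_bound[where f="\<lambda>\<omega>. \<Sum>j\<in>UNIV. \<bar>u $ j\<bar> * \<bar>n i \<omega> $ j\<bar>"])
  show "integrable M (\<lambda>\<omega>. \<Sum>j\<in>UNIV. \<bar>u $ j\<bar> * \<bar>n i \<omega> $ j\<bar>)"
    using coord_int_abs by auto
  show "(\<lambda>\<omega>. \<bar>n i \<omega> \<bullet> u\<bar>) \<in> borel_measurable M" by measurable
  show "AE \<omega> in M. norm \<bar>n i \<omega> \<bullet> u\<bar> \<le> norm (\<Sum>j\<in>UNIV. \<bar>u $ j\<bar> * \<bar>n i \<omega> $ j\<bar>)"
  proof (intro AE_I2)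
    fix \<omega>
    have "\<bar>n i \<omega> \<bullet> u\<bar> \<le> (\<Sum>j\<in>UNIV. \<bar>n i \<omega> $ j * u $ j\<bar>)"
      unfolding inner_vec_def by (simp add: sum_abs)
    also have "\<dots> = (\<Sum>j\<in>UNIV. \<bar>u $ j\<bar> * \<bar>n i \<omega> $ j\<bar>)" by (simp add: abs_mult mult.commute)
    finally show "norm \<bar>n i \<omega> \<bullet> u\<bar> \<le> norm (\<Sum>j\<in>UNIV. \<bar>u $ j\<bar> * \<bar>n i \<omega> $ j\<bar>)"
      by (simp add: sum_nonneg)
  qed
qed

lemma hard_orth:
  fixes x :: "nat \<Rightarrow> real^'d"
  assumes l: "l < L" and orth: "\<And>r. r < L \<Longrightarrow> u \<bullet> x r = 0"
  shows "expectation (\<lambda>\<omega>. (n i \<omega> \<bullet> u) * (if hard_assign x L (n i \<omega>) = l then 1 else 0)) = 0"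
proof -
  define G where "G v = (if hard_assign x L v = l then 1 else 0 :: real)" for v
  have Gm[measurable]: "G \<in> borel_measurable borel" unfolding G_def[abs_def] by (rule hard_ind_meas[OF l])
  define S where "S k v = smx L (\<lambda>r. real k *\<^sub>R x r) (\<lambda>r. - sqrt (real k) * real r) l v" for k :: nat and v
  have Sm[measurable]: "S k \<in> borel_measurable borel" for k
    unfolding S_def[abs_def] using l by (intro borel_measurable_continuous_onI smx_cont) simp
  have z: "expectation (\<lambda>\<omega>. (n i \<omega> \<bullet> u) * S k (n i \<omega>)) = 0" for k
    unfolding S_def by (rule smx_orth[OF l]) (simp add: orth)
  have "(\<lambda>k. expectation (\<lambda>\<omega>. (n i \<omega> \<bullet> u) * S k (n i \<omega>))) \<longlonglongrightarrow>
      expectation (\<lambda>\<omega>. (n i \<omega> \<bullet> u) * G (n i \<omega>))"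
  proof (rule integral_dominated_convergence[where w="\<lambda>\<omega>. \<bar>n i \<omega> \<bullet> u\<bar>"])
    show "(\<lambda>\<omega>. (n i \<omega> \<bullet> u) * G (n i \<omega>)) \<in> borel_measurable M"
      by measurable
    show "(\<lambda>\<omega>. (n i \<omega> \<bullet> u) * S k (n i \<omega>)) \<in> borel_measurable M" for k
      by measurable
    show "integrable M (\<lambda>\<omega>. \<bar>n i \<omega> \<bullet> u\<bar>)" by (rule inner_int)
    show "AE \<omega> in M. (\<lambda>k. (n i \<omega> \<bullet> u) * S k (n i \<omega>)) \<longlonglongrightarrow> (n i \<omega> \<bullet> u) * G (n i \<omega>)"
      unfolding S_def G_def by (intro AE_I2 tendsto_mult tendsto_const smx_hard_lim[OF l])
    show "AE \<omega> in M. norm ((n i \<omega> \<bullet> u) * S k (n i \<omega>)) \<le> \<bar>n i \<omega> \<bullet> u\<bar>" for k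
    proof (intro AE_I2)
      fix \<omega>
      have "0 \<le> S k (n i \<omega>)" "S k (n i \<omega>) \<le> 1" unfolding S_def by (rule smx_nonneg, rule smx_le1[OF l])
      then have "\<bar>S k (n i \<omega>)\<bar> \<le> 1" by simp
      then show "norm ((n i \<omega> \<bullet> u) * S k (n i \<omega>)) \<le> \<bar>n i \<omega> \<bullet> u\<bar>"
        unfolding real_norm_def abs_mult by (metis abs_ge_zero mult_left_le)
    qed
  qed
  then have "(\<lambda>k. 0) \<longlonglongrightarrow> expectation (\<lambda>\<omega>. (n i \<omega> \<bullet> u) * G (n i \<omega>))" by (simp only: z)
  from LIMSEQ_unique[OF tendsto_const this] show ?thesis by (simp add: G_def)
qed

end

lemma span_image_sum:
  fixes x :: "nat \<Rightarrow> 'a::real_vector"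
  shows "w \<in> span (x ` {..<L}) \<Longrightarrow> \<exists>\<alpha>. w = (\<Sum>k<L. \<alpha> k *\<^sub>R x k)"
proof (induction L arbitrary: w)
  case 0
  then show ?case by simp
next
  case (Suc L)
  have "x ` {..<Suc L} = insert (x L) (x ` {..<L})" by (auto simp: lessThan_Suc)
  with Suc.prems obtain c where c: "w - c *\<^sub>R x L \<in> span (x ` {..<L})"
    by (auto simp: span_insert)
  from Suc.IH[OF c] obtain \<alpha> where a: "w - c *\<^sub>R x L = (\<Sum>k<L. \<alpha> k *\<^sub>R x k)" by blast
  have "(\<Sum>k<Suc L. (\<alpha>(L := c)) k *\<^sub>R x k) = (\<Sum>k<L. \<alpha> k *\<^sub>R x k) + c *\<^sub>R x L"
    by (simp add: lessThan_Suc)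
  also have "\<dots> = w" using a by (simp add: algebra_simps)
  finally show ?case by metis
qed

lemma in_span_of_orth:
  fixes x :: "nat \<Rightarrow> 'a::euclidean_space" and v :: 'a
  assumes H: "\<And>u. (\<And>r. r < L \<Longrightarrow> u \<bullet> x r = 0) \<Longrightarrow> v \<bullet> u = 0"
  shows "\<exists>\<alpha>. v = (\<Sum>k<L. \<alpha> k *\<^sub>R x k)"
proof -
  obtain y z where y: "y \<in> span (x ` {..<L})" and z: "\<And>w. w \<in> span (x ` {..<L}) \<Longrightarrow> orthogonal z w"
    and v: "v = y + z"
    by (rule orthogonal_subspace_decomp_exists[of "x ` {..<L}" v]) blast
  have zx: "z \<bullet> x r = 0" if "r < L" for r
    using z[of "x r"] that span_superset[of "x ` {..<L}"] by (auto simp: orthogonal_def)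
  have "v \<bullet> z = 0" by (rule H) (rule zx)
  moreover have "y \<bullet> z = 0" using z[OF y] by (simp add: orthogonal_def inner_commute)
  ultimately have "z \<bullet> z = 0" unfolding v by (simp add: inner_add_left)
  then have "z = 0" by simp
  then show ?thesis using span_image_sum[OF y] v by simp
qed


context gsetup begin

lemma fun_int:
  fixes g :: "real^'d \<Rightarrow> real"
  assumes gm: "g \<in> borel_measurable borel" and gb: "\<And>v. \<bar>g v\<bar> \<le> \<bar>v $ j\<bar> + 1"
  shows "integrable M (\<lambda>\<omega>. g (n i \<omega>))" and "integrable M (\<lambda>\<omega>. (g (n i \<omega>))^2)"
proof -
  show "integrable M (\<lambda>\<omega>. g (n i \<omega>))"
  proof (rule Bochner_Integration.integrable_bound[where f="\<lambda>\<omega>. \<bar>n i \<omega> $ j\<bar> + 1"])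
    show "integrable M (\<lambda>\<omega>. \<bar>n i \<omega> $ j\<bar> + 1)" using coord_int_abs by auto
    show "(\<lambda>\<omega>. g (n i \<omega>)) \<in> borel_measurable M" using gm by measurable
    show "AE \<omega> in M. norm (g (n i \<omega>)) \<le> norm (\<bar>n i \<omega> $ j\<bar> + 1)"
      using gb by (intro AE_I2) (auto intro: order_trans)
  qed
  show "integrable M (\<lambda>\<omega>. (g (n i \<omega>))^2)"
  proof (rule Bochner_Integration.integrable_bound[where f="\<lambda>\<omega>. 2 * (n i \<omega> $ j)^2 + 2"])
    show "integrable M (\<lambda>\<omega>. 2 * (n i \<omega> $ j)^2 + 2)" using coord_int2 by auto
    show "(\<lambda>\<omega>. (g (n i \<omega>))^2) \<in> borel_measurable M" using gm by measurable
    show "AE \<omega> in M. norm ((g (n i \<omega>))^2) \<le> norm (2 * (n i \<omega> $ j)^2 + 2)"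
    proof (intro AE_I2)
      fix \<omega>
      have a: "\<bar>g (n i \<omega>)\<bar> \<le> \<bar>n i \<omega> $ j\<bar> + 1" by (rule gb)
      have "(g (n i \<omega>))^2 = \<bar>g (n i \<omega>)\<bar>^2" by simp
      also have "\<dots> \<le> (\<bar>n i \<omega> $ j\<bar> + 1)^2" by (rule power_mono[OF a]) simp
      also have "\<dots> \<le> 2 * (n i \<omega> $ j)^2 + 2"
        using sum_squares_bound[of "\<bar>n i \<omega> $ j\<bar>" 1] by (simp add: power2_eq_square algebra_simps)
      finally show "norm ((g (n i \<omega>))^2) \<le> norm (2 * (n i \<omega> $ j)^2 + 2)" by simp
    qed
  qed
qed

lemma slln_fun_nonneg:
  fixes g :: "real^'d \<Rightarrow> real"
  assumes gm: "g \<in> borel_measurable borel" and gb: "\<And>v. \<bar>g v\<bar> \<le> \<bar>v $ j\<bar> + 1" and g0: "\<And>v. 0 \<le> g v"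
  shows "AE \<omega> in M. (\<lambda>m. (\<Sum>i<m. g (n i \<omega>)) / real m) \<longlonglongrightarrow> expectation (\<lambda>\<omega>. g (n 0 \<omega>))"
proof (rule slln_nonneg[where C="expectation (\<lambda>\<omega>. (g (n 0 \<omega>))^2)"])
  show "(\<lambda>\<omega>. g (n i \<omega>)) \<in> borel_measurable M" for i using gm by measurable
  show "0 \<le> g (n i \<omega>)" for i \<omega> by (rule g0)
  show "integrable M (\<lambda>\<omega>. (g (n i \<omega>))^2)" for i by (rule fun_int(2)[OF gm gb])
  show "expectation (\<lambda>\<omega>. g (n i \<omega>)) = expectation (\<lambda>\<omega>. g (n 0 \<omega>))" for i
    by (rule law_integral(1)[OF gm])
  have g2m: "(\<lambda>v. (g v)^2) \<in> borel_measurable borel" using gm by measurable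
  show "expectation (\<lambda>\<omega>. (g (n i \<omega>))^2) \<le> expectation (\<lambda>\<omega>. (g (n 0 \<omega>))^2)" for i
    using law_integral(1)[OF g2m, of i] by simp
  show "indep_var borel (\<lambda>\<omega>. g (n i \<omega>)) borel (\<lambda>\<omega>. g (n k \<omega>))" if "i \<noteq> k" for i k
    using indep_var_compose[OF indep_pair[OF that] gm gm] by (simp add: o_def)
qed

lemma slln_fun:
  fixes h :: "real^'d \<Rightarrow> real"
  assumes hm: "h \<in> borel_measurable borel" and hb: "\<And>v. \<bar>h v\<bar> \<le> \<bar>v $ j\<bar> + 1"
  shows "AE \<omega> in M. (\<lambda>m. (\<Sum>i<m. h (n i \<omega>)) / real m) \<longlonglongrightarrow> expectation (\<lambda>\<omega>. h (n 0 \<omega>))"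
proof -
  define hp where "hp v = max 0 (h v)" for v
  define hn where "hn v = max 0 (- h v)" for v
  have hpm: "hp \<in> borel_measurable borel" unfolding hp_def[abs_def] using hm by measurable
  have hnm: "hn \<in> borel_measurable borel" unfolding hn_def[abs_def] using hm by measurable
  have hpb: "\<bar>hp v\<bar> \<le> \<bar>v $ j\<bar> + 1" for v using hb[of v] by (simp add: hp_def)
  have hnb: "\<bar>hn v\<bar> \<le> \<bar>v $ j\<bar> + 1" for v using hb[of v] by (simp add: hn_def)
  have split: "h v = hp v - hn v" for v by (simp add: hp_def hn_def)
  have E: "expectation (\<lambda>\<omega>. h (n 0 \<omega>)) = expectation (\<lambda>\<omega>. hp (n 0 \<omega>)) - expectation (\<lambda>\<omega>. hn (n 0 \<omega>))"
    unfolding split using fun_int(1)[OF hpm hpb] fun_int(1)[OF hnm hnb] by simp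
  have P: "AE \<omega> in M. (\<lambda>m. (\<Sum>i<m. hp (n i \<omega>)) / real m) \<longlonglongrightarrow> expectation (\<lambda>\<omega>. hp (n 0 \<omega>))"
    by (rule slln_fun_nonneg[OF hpm hpb]) (simp add: hp_def)
  have N: "AE \<omega> in M. (\<lambda>m. (\<Sum>i<m. hn (n i \<omega>)) / real m) \<longlonglongrightarrow> expectation (\<lambda>\<omega>. hn (n 0 \<omega>))"
    by (rule slln_fun_nonneg[OF hnm hnb]) (simp add: hn_def)
  show ?thesis using P N
  proof eventually_elim
    case (elim \<omega>)
    have "(\<lambda>m. (\<Sum>i<m. hp (n i \<omega>)) / real m - (\<Sum>i<m. hn (n i \<omega>)) / real m) \<longlonglongrightarrow>
        expectation (\<lambda>\<omega>. hp (n 0 \<omega>)) - expectation (\<lambda>\<omega>. hn (n 0 \<omega>))"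
      by (intro tendsto_diff elim)
    moreover have "(\<Sum>i<m. hp (n i \<omega>)) / real m - (\<Sum>i<m. hn (n i \<omega>)) / real m = (\<Sum>i<m. h (n i \<omega>)) / real m" for m
      unfolding split by (simp add: sum_subtractf diff_divide_distrib)
    ultimately show ?case unfolding E by simp
  qed
qed

end

context gsetup begin

lemma weighted_limit:
  fixes G :: "real^'d \<Rightarrow> real" and x :: "nat \<Rightarrow> real^'d"
  assumes Gm: "G \<in> borel_measurable borel" and G0: "\<And>v. 0 \<le> G v" and G1: "\<And>v. G v \<le> 1"
    and orth: "\<And>u. (\<And>r. r < L \<Longrightarrow> u \<bullet> x r = 0) \<Longrightarrow> expectation (\<lambda>\<omega>. (n 0 \<omega> \<bullet> u) * G (n 0 \<omega>)) = 0"
  shows "\<exists>\<alpha>. AE \<omega> in M. (\<lambda>m. (1 / (\<Sum>i<m. G (n i \<omega>))) *\<^sub>R (\<Sum>i<m. G (n i \<omega>) *\<^sub>R n i \<omega>))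
            \<longlonglongrightarrow> (\<Sum>k<L. \<alpha> k *\<^sub>R x k)"
proof -
  define p where "p = expectation (\<lambda>\<omega>. G (n 0 \<omega>))"
  define V :: "real^'d" where "V = (\<chi> j. expectation (\<lambda>\<omega>. n 0 \<omega> $ j * G (n 0 \<omega>)))"
  have Gb: "\<bar>G v\<bar> \<le> \<bar>v $ j\<bar> + 1" for v j using G0[of v] G1[of v] by simp
  have Gint: "integrable M (\<lambda>\<omega>. G (n i \<omega>))" for i by (rule fun_int(1)[OF Gm Gb])
  have hm: "(\<lambda>v. v $ j * G v) \<in> borel_measurable borel" for j using Gm by measurable
  have hb: "\<bar>v $ j * G v\<bar> \<le> \<bar>v $ j\<bar> + 1" for v j
  proof -
    have "\<bar>v $ j * G v\<bar> \<le> \<bar>v $ j\<bar> * 1" unfolding abs_mult using G0[of v] G1[of v] by (intro mult_left_mono) auto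
    then show ?thesis by simp
  qed
  have hint: "integrable M (\<lambda>\<omega>. n 0 \<omega> $ j * G (n 0 \<omega>))" for j by (rule fun_int(1)[OF hm hb])
  have Vin: "\<exists>\<alpha>. V = (\<Sum>k<L. \<alpha> k *\<^sub>R x k)"
  proof (rule in_span_of_orth)
    fix u :: "real^'d" assume ux: "\<And>r. r < L \<Longrightarrow> u \<bullet> x r = 0"
    have "V \<bullet> u = (\<Sum>j\<in>UNIV. expectation (\<lambda>\<omega>. n 0 \<omega> $ j * G (n 0 \<omega>)) * u $ j)"
      by (simp add: V_def inner_vec_def)
    also have "\<dots> = expectation (\<lambda>\<omega>. \<Sum>j\<in>UNIV. n 0 \<omega> $ j * G (n 0 \<omega>) * u $ j)"
      using hint by (simp add: Bochner_Integration.integral_sum)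
    also have "\<dots> = expectation (\<lambda>\<omega>. (n 0 \<omega> \<bullet> u) * G (n 0 \<omega>))"
      by (rule Bochner_Integration.integral_cong) (auto simp: inner_vec_def sum_distrib_left ac_simps)
    also have "\<dots> = 0" by (rule orth[OF ux])
    finally show "V \<bullet> u = 0" .
  qed
  then obtain \<alpha> where \<alpha>: "V = (\<Sum>k<L. \<alpha> k *\<^sub>R x k)" by blast
  show ?thesis
  proof (cases "p = 0")
    case True
    have "AE \<omega> in M. G (n i \<omega>) = 0" for i
    proof -
      have "expectation (\<lambda>\<omega>. G (n i \<omega>)) = 0"
        using law_integral(1)[OF Gm, of i] True by (simp add: p_def)
      then show ?thesis using integral_nonneg_eq_0_iff_AE[OF Gint] G0 by simp
    qed
    then have "AE \<omega> in M. \<forall>i. G (n i \<omega>) = 0" by (simp add: AE_all_countable)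
    then have "AE \<omega> in M. (\<lambda>m. (1 / (\<Sum>i<m. G (n i \<omega>))) *\<^sub>R (\<Sum>i<m. G (n i \<omega>) *\<^sub>R n i \<omega>))
            \<longlonglongrightarrow> (\<Sum>k<L. 0 *\<^sub>R x k)"
      by eventually_elim simp
    then show ?thesis by (intro exI[of _ "\<lambda>_. 0"])
  next
    case False
    have A1: "AE \<omega> in M. (\<lambda>m. (\<Sum>i<m. G (n i \<omega>)) / real m) \<longlonglongrightarrow> p"
      unfolding p_def by (rule slln_fun[OF Gm Gb])
    have A2: "AE \<omega> in M. \<forall>j\<in>UNIV. (\<lambda>m. (\<Sum>i<m. n i \<omega> $ j * G (n i \<omega>)) / real m) \<longlonglongrightarrow> V $ j"
      by (subst AE_finite_all) (simp_all add: V_def slln_fun[OF hm hb])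
    have "AE \<omega> in M. (\<lambda>m. (1 / (\<Sum>i<m. G (n i \<omega>))) *\<^sub>R (\<Sum>i<m. G (n i \<omega>) *\<^sub>R n i \<omega>))
            \<longlonglongrightarrow> (1 / p) *\<^sub>R V"
      using A1 A2
    proof eventually_elim
      case (elim \<omega>)
      define S where "S m = (\<Sum>i<m. G (n i \<omega>))" for m
      define T where "T m = (\<Sum>i<m. G (n i \<omega>) *\<^sub>R n i \<omega>)" for m
      have T: "(\<lambda>m. (1 / real m) *\<^sub>R T m) \<longlonglongrightarrow> V"
      proof (rule vec_tendstoI)
        fix j
        have tj: "T m $ j = (\<Sum>i<m. n i \<omega> $ j * G (n i \<omega>))" for m
          by (simp add: T_def sum_component mult.commute)
        have "(\<lambda>m. ((1 / real m) *\<^sub>R T m) $ j) = (\<lambda>m. (\<Sum>i<m. n i \<omega> $ j * G (n i \<omega>)) / real m)"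
          by (rule ext) (simp add: tj)
        then show "(\<lambda>m. ((1 / real m) *\<^sub>R T m) $ j) \<longlonglongrightarrow> V $ j" using elim(2) by simp
      qed
      have S: "(\<lambda>m. S m / real m) \<longlonglongrightarrow> p" using elim(1) by (simp add: S_def)
      have lim: "(\<lambda>m. (1 / (S m / real m)) *\<^sub>R ((1 / real m) *\<^sub>R T m)) \<longlonglongrightarrow> (1 / p) *\<^sub>R V"
        by (intro tendsto_scaleR tendsto_divide tendsto_const S T False)
      have ev: "eventually (\<lambda>m. (1 / (S m / real m)) *\<^sub>R ((1 / real m) *\<^sub>R T m) = (1 / S m) *\<^sub>R T m) sequentially"
        unfolding eventually_sequentially by (intro exI[of _ 1]) auto
      have "(\<lambda>m. (1 / S m) *\<^sub>R T m) \<longlonglongrightarrow> (1 / p) *\<^sub>R V"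
        by (rule Lim_transform_eventually[OF lim ev])
      then show ?case by (simp add: S_def T_def)
    qed
    moreover have "(1 / p) *\<^sub>R V = (\<Sum>k<L. ((1 / p) * \<alpha> k) *\<^sub>R x k)"
      unfolding \<alpha> by (simp add: scaleR_sum_right)
    ultimately show ?thesis by (intro exI[of _ "\<lambda>k. (1 / p) * \<alpha> k"]) simp
  qed
qed

end

lemma soft_is_smx: "soft_weight x L v l = smx L x (\<lambda>_. 0) l v"
  unfolding soft_weight_def smx_def by simp

theorem theorem4:
  fixes M :: "'w measure" and L :: nat
    and x :: "nat \<Rightarrow> real^'d"
    and n :: "nat \<Rightarrow> 'w \<Rightarrow> real^'d"
  assumes "prob_space M"
    and "L \<ge> 2"
    and "\<forall>k<L. \<forall>k'<L. k \<noteq> k' \<longrightarrow> x k \<noteq> x k'"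
    and "\<forall>k<L. norm (x k) = norm (x 0)"
    and "prob_space.indep_vars M (\<lambda>_. borel) (\<lambda>(i, j) \<omega>. n i \<omega> $ j) UNIV"
    and "\<forall>i j. distributed M lborel (\<lambda>\<omega>. n i \<omega> $ j) (\<lambda>t. ennreal (std_normal_density t))"
  shows "(\<forall>l<L. \<exists>\<alpha> :: nat \<Rightarrow> real.
            AE \<omega> in M. (\<lambda>m. hard_est x L (\<lambda>i. n i \<omega>) m l) \<longlonglongrightarrow> (\<Sum>k<L. \<alpha> k *\<^sub>R x k))
       \<and> (\<forall>l<L. \<exists>\<alpha> :: nat \<Rightarrow> real.
            AE \<omega> in M. (\<lambda>m. soft_est x L (\<lambda>i. n i \<omega>) m l) \<longlonglongrightarrow> (\<Sum>k<L. \<alpha> k *\<^sub>R x k))"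
proof -
  interpret prob_space M by fact
  interpret gsetup M n
    by unfold_locales (use assms(5,6) in auto)
  have L0: "0 < L" using assms(2) by simp
  have hard: "\<exists>\<alpha> :: nat \<Rightarrow> real.
            AE \<omega> in M. (\<lambda>m. hard_est x L (\<lambda>i. n i \<omega>) m l) \<longlonglongrightarrow> (\<Sum>k<L. \<alpha> k *\<^sub>R x k)"
    if l: "l < L" for l
  proof -
    define G where "G v = (if hard_assign x L v = l then 1 else 0 :: real)" for v
    have "\<exists>\<alpha>. AE \<omega> in M. (\<lambda>m. (1 / (\<Sum>i<m. G (n i \<omega>))) *\<^sub>R (\<Sum>i<m. G (n i \<omega>) *\<^sub>R n i \<omega>))
            \<longlonglongrightarrow> (\<Sum>k<L. \<alpha> k *\<^sub>R x k)"
    proof (rule weighted_limit)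
      show "G \<in> borel_measurable borel" unfolding G_def[abs_def] by (rule hard_ind_meas[OF l])
      show "0 \<le> G v" "G v \<le> 1" for v by (simp_all add: G_def)
      show "expectation (\<lambda>\<omega>. (n 0 \<omega> \<bullet> u) * G (n 0 \<omega>)) = 0" if "\<And>r. r < L \<Longrightarrow> u \<bullet> x r = 0" for u
        unfolding G_def by (rule hard_orth[OF l that])
    qed
    moreover have "hard_est x L (\<lambda>i. n i \<omega>) m l = (1 / (\<Sum>i<m. G (n i \<omega>))) *\<^sub>R (\<Sum>i<m. G (n i \<omega>) *\<^sub>R n i \<omega>)" for \<omega> m
    proof -
      have c: "real (card {i\<in>{..<m}. hard_assign x L (n i \<omega>) = l}) = (\<Sum>i<m. G (n i \<omega>))"
      proof -
        have "real (card {i\<in>{..<m}. hard_assign x L (n i \<omega>) = l}) = (\<Sum>i\<in>{i\<in>{..<m}. hard_assign x L (n i \<omega>) = l}. 1)"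
          by simp
        also have "\<dots> = (\<Sum>i<m. G (n i \<omega>))"
          by (subst sum.inter_filter) (auto simp: G_def)
        finally show ?thesis .
      qed
      have s: "(\<Sum>i\<in>{i\<in>{..<m}. hard_assign x L (n i \<omega>) = l}. n i \<omega>) = (\<Sum>i<m. G (n i \<omega>) *\<^sub>R n i \<omega>)"
        by (subst sum.inter_filter) (auto simp: G_def intro!: sum.cong)
      show ?thesis unfolding hard_est_def c s ..
    qed
    ultimately show ?thesis by simp
  qed
  have soft: "\<exists>\<alpha> :: nat \<Rightarrow> real.
            AE \<omega> in M. (\<lambda>m. soft_est x L (\<lambda>i. n i \<omega>) m l) \<longlonglongrightarrow> (\<Sum>k<L. \<alpha> k *\<^sub>R x k)"
    if l: "l < L" for l
  proof -
    define G where "G v = soft_weight x L v l" for v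
    have "\<exists>\<alpha>. AE \<omega> in M. (\<lambda>m. (1 / (\<Sum>i<m. G (n i \<omega>))) *\<^sub>R (\<Sum>i<m. G (n i \<omega>) *\<^sub>R n i \<omega>))
            \<longlonglongrightarrow> (\<Sum>k<L. \<alpha> k *\<^sub>R x k)"
    proof (rule weighted_limit)
      show "G \<in> borel_measurable borel" unfolding G_def[abs_def] soft_is_smx
        by (intro borel_measurable_continuous_onI smx_cont L0)
      show "0 \<le> G v" for v unfolding G_def soft_is_smx by (rule smx_nonneg)
      show "G v \<le> 1" for v unfolding G_def soft_is_smx by (rule smx_le1[OF l])
      show "expectation (\<lambda>\<omega>. (n 0 \<omega> \<bullet> u) * G (n 0 \<omega>)) = 0" if "\<And>r. r < L \<Longrightarrow> u \<bullet> x r = 0" for u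
        unfolding G_def soft_is_smx by (rule smx_orth[OF l that])
    qed
    then show ?thesis unfolding soft_est_def G_def by simp
  qed
  show ?thesis using hard soft by blast
qed


end
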